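(* Let $M$ be a $d$-dimensional Hausdorff $\sigma$-compact manifold, $(U_i,\varphi_i)_{i\in I}$ a locally finite atlas of relatively compact charts with $\varphi_i(U_i)=\mathbb{R}^d$, $V_i\subseteq M$ open with $\overline{V_i}\subseteq U_i$, and $(\chi_i)_{i\in I}$ a smooth partition of unity with $\operatorname{supp}\chi_i\subseteq V_i$. For $i\in I$ let $J_i=\{j\in I: U_j\cap U_i\ne\emptyset\}$ (a finite set). Fix $n\in\mathbb{N}$. Then the mixing map $$\mu\colon\bigoplus_{i\in I}C^\infty_{\mathrm{co}}(U_i,\mathbb{R}^n)\to\bigoplus_{i\in I}C^\infty_{\mathrm{co}}(V_i,\mathbb{R}^n),\qquad(f_i)_{i\in I}\mapsto\Big(\sum_{j\in J_i}(\chi_j|_{V_i\cap V_j})\cdot f_j|_{V_i\cap V_j}\Big)_{i\in I},$$ where each summand is extended by $0$ to a smooth function on $V_i$, is well defined and continuous linear, and its image is contained in the closed subspace $\{(g_i)_{i\in I}: g_j|_{V_i\cap V_j}=g_i|_{V_i\cap V_j}\ \forall i,j\in I\}$.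
   Context: $C^\infty_{\mathrm{co}}(W,\mathbb{R}^n)$ denotes smooth maps on an open $W$ with the compact-open $C^\infty$-topology (uniform convergence of all derivatives on compact sets); direct sums carry the locally convex direct sum topology. *)

theory Defs
  imports "HOL-Analysis.Analysis"
begin

definition pdir :: "'d::finite \<Rightarrow> (real^'d \<Rightarrow> 'b::real_normed_vector) \<Rightarrow> real^'d \<Rightarrow> 'b" where
  "pdir k g = (\<lambda>x. frechet_derivative g (at x) (axis k 1))"

fun pder :: "'d::finite list \<Rightarrow> (real^'d \<Rightarrow> 'b::real_normed_vector) \<Rightarrow> real^'d \<Rightarrow> 'b" where
  "pder [] g = g"
| "pder (k # ks) g = pdir k (pder ks g)"

definition smooth_on_euc :: "(real^'d::finite \<Rightarrow> 'b::real_normed_vector) \<Rightarrow> (real^'d) set \<Rightarrow> bool" where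
  "smooth_on_euc g S \<longleftrightarrow> (\<forall>ks. pder ks g differentiable_on S)"

definition smooth_atlas ::
  "'m topology \<Rightarrow> 'i set \<Rightarrow> ('i \<Rightarrow> 'm set) \<Rightarrow> ('i \<Rightarrow> 'm \<Rightarrow> real^'d::finite) \<Rightarrow> bool" where
  "smooth_atlas M I U \<phi> \<longleftrightarrow>
     (\<forall>i\<in>I. openin M (U i) \<and> homeomorphic_map (subtopology M (U i)) (top_of_set (\<phi> i ` U i)) (\<phi> i)) \<and>
     (\<Union>i\<in>I. U i) = topspace M \<and>
     (\<forall>i\<in>I. \<forall>j\<in>I. smooth_on_euc (\<phi> j \<circ> inv_into (U i) (\<phi> i)) (\<phi> i ` (U i \<inter> U j)))"

definition mf_smooth ::
  "'i set \<Rightarrow> ('i \<Rightarrow> 'm set) \<Rightarrow> ('i \<Rightarrow> 'm \<Rightarrow> real^'d::finite) \<Rightarrow> 'm set \<Rightarrow> ('m \<Rightarrow> 'b::real_normed_vector) \<Rightarrow> bool" where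
  "mf_smooth I U \<phi> W f \<longleftrightarrow> (\<forall>j\<in>I. smooth_on_euc (f \<circ> inv_into (U j) (\<phi> j)) (\<phi> j ` (U j \<inter> W)))"

text \<open>Elements are smooth maps on W, extended by 0 outside W (so that they form a vector space).\<close>
definition Cinf_space ::
  "'i set \<Rightarrow> ('i \<Rightarrow> 'm set) \<Rightarrow> ('i \<Rightarrow> 'm \<Rightarrow> real^'d::finite) \<Rightarrow> 'm set \<Rightarrow> ('m \<Rightarrow> real^'n::finite) set" where
  "Cinf_space I U \<phi> W = {f. mf_smooth I U \<phi> W f \<and> (\<forall>x. x \<notin> W \<longrightarrow> f x = 0)}"

definition Cinf_seminorms ::
  "'i set \<Rightarrow> ('i \<Rightarrow> 'm set) \<Rightarrow> ('i \<Rightarrow> 'm \<Rightarrow> real^'d::finite) \<Rightarrow> 'm set \<Rightarrow> (('m \<Rightarrow> real^'n::finite) \<Rightarrow> real) set" where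
  "Cinf_seminorms I U \<phi> W =
     {(\<lambda>f. Sup (insert 0 ((\<lambda>y. norm (pder ks (f \<circ> inv_into (U j) (\<phi> j)) y)) ` K))) | j K ks.
        j \<in> I \<and> compact K \<and> K \<subseteq> \<phi> j ` (U j \<inter> W)}"

definition Cinf_top ::
  "'i set \<Rightarrow> ('i \<Rightarrow> 'm set) \<Rightarrow> ('i \<Rightarrow> 'm \<Rightarrow> real^'d::finite) \<Rightarrow> 'm set \<Rightarrow> ('m \<Rightarrow> real^'n::finite) topology" where
  "Cinf_top I U \<phi> W = topology (\<lambda>S. S \<subseteq> Cinf_space I U \<phi> W \<and>
     (\<forall>f\<in>S. \<exists>F e. finite F \<and> F \<subseteq> Cinf_seminorms I U \<phi> W \<and> e > 0 \<and>
        {g \<in> Cinf_space I U \<phi> W. \<forall>p\<in>F. p (\<lambda>x. g x - f x) < e} \<subseteq> S))"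

definition dsum_carrier :: "'i set \<Rightarrow> ('i \<Rightarrow> ('m \<Rightarrow> 'v::real_vector) set) \<Rightarrow> ('i \<Rightarrow> 'm \<Rightarrow> 'v) set" where
  "dsum_carrier I C = {F. (\<forall>i\<in>I. F i \<in> C i) \<and> (\<forall>i. i \<notin> I \<longrightarrow> F i = (\<lambda>x. 0)) \<and>
                           finite {i\<in>I. F i \<noteq> (\<lambda>x. 0)}}"

definition inj_at :: "'i \<Rightarrow> ('m \<Rightarrow> 'v::real_vector) \<Rightarrow> 'i \<Rightarrow> 'm \<Rightarrow> 'v" where
  "inj_at i v = (\<lambda>j. if j = i then v else (\<lambda>x. 0))"

definition abs_convex :: "('i \<Rightarrow> 'm \<Rightarrow> 'v::real_vector) set \<Rightarrow> bool" where
  "abs_convex W \<longleftrightarrow> (\<forall>F\<in>W. \<forall>G\<in>W. \<forall>a b. \<bar>a\<bar> + \<bar>b\<bar> \<le> 1 \<longrightarrow> (\<lambda>i x. a *\<^sub>R F i x + b *\<^sub>R G i x) \<in> W)"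

text \<open>Finest locally convex topology making all inclusions continuous: 0-neighbourhood base
  = absolutely convex sets whose trace on every summand is a 0-neighbourhood.\<close>
definition dsum_top ::
  "'i set \<Rightarrow> ('i \<Rightarrow> ('m \<Rightarrow> 'v::real_vector) set) \<Rightarrow> ('i \<Rightarrow> ('m \<Rightarrow> 'v) topology) \<Rightarrow> ('i \<Rightarrow> 'm \<Rightarrow> 'v) topology" where
  "dsum_top I C T = topology (\<lambda>S. S \<subseteq> dsum_carrier I C \<and>
     (\<forall>F\<in>S. \<exists>W. W \<subseteq> dsum_carrier I C \<and> abs_convex W \<and>
        (\<forall>i\<in>I. \<exists>N. openin (T i) N \<and> (\<lambda>x. 0) \<in> N \<and> N \<subseteq> {v \<in> C i. inj_at i v \<in> W}) \<and>
        {(\<lambda>i x. F i x + G i x) | G. G \<in> W} \<subseteq> S))"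

definition mix :: "'i set \<Rightarrow> ('i \<Rightarrow> 'm set) \<Rightarrow> ('i \<Rightarrow> 'm set) \<Rightarrow> ('i \<Rightarrow> 'm \<Rightarrow> real)
                   \<Rightarrow> ('i \<Rightarrow> 'm \<Rightarrow> real^'n::finite) \<Rightarrow> 'i \<Rightarrow> 'm \<Rightarrow> real^'n" where
  "mix I U V \<rho> F = (\<lambda>i x. if i \<in> I \<and> x \<in> V i then
      (\<Sum>j\<in>{j\<in>I. U j \<inter> U i \<noteq> {}}. if x \<in> V j then \<rho> j x *\<^sub>R F j x else 0) else 0)"

end

theory Submission
  imports Defs
begin

lemma frechet_eq_local:
  assumes "open S" "x \<in> S" "\<And>y. y \<in> S \<Longrightarrow> f y = g y"
  shows "frechet_derivative f (at x) = frechet_derivative g (at x)"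
proof -
  have "\<And>D. (f has_derivative D) (at x) \<longleftrightarrow> (g has_derivative D) (at x)"
    using assms has_derivative_transform_within_open[of f _ x UNIV S g]
      has_derivative_transform_within_open[of g _ x UNIV S f] by auto
  then show ?thesis unfolding frechet_derivative_def by simp
qed

lemma pdir_local:
  assumes "open S" "x \<in> S" "\<And>y. y \<in> S \<Longrightarrow> f y = g y"
  shows "pdir k f x = pdir k g x"
  using frechet_eq_local[OF assms] by (simp add: pdir_def)

lemma pder_local:
  assumes "open S" "\<And>y. y \<in> S \<Longrightarrow> f y = g y"
  shows "y \<in> S \<Longrightarrow> pder ks f y = pder ks g y"
proof (induction ks arbitrary: y)
  case Nil then show ?case using assms by simp
next
  case (Cons k ks)
  show ?case using pdir_local[OF assms(1) Cons.prems, of "pder ks f" "pder ks g"] Cons.IH by simp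
qed

lemma pdir_has:
  assumes "(f has_derivative D) (at x)"
  shows "pdir k f x = D (axis k 1)"
  using frechet_derivative_at[OF assms] by (simp add: pdir_def)

lemma pder_zero: "pder ks (\<lambda>x. 0) = (\<lambda>x. 0)"
  by (induction ks) (auto simp: pdir_def)

lemma smooth_zero: "smooth_on_euc (\<lambda>x. 0) S"
  by (simp add: smooth_on_euc_def pder_zero)

lemma smooth_subset: "smooth_on_euc f S \<Longrightarrow> T \<subseteq> S \<Longrightarrow> smooth_on_euc f T"
  by (meson differentiable_on_subset smooth_on_euc_def)

lemma smooth_diff_at: "smooth_on_euc f S \<Longrightarrow> open S \<Longrightarrow> x \<in> S \<Longrightarrow> pder ks f differentiable at x"
  by (meson differentiable_on_eq_differentiable_at smooth_on_euc_def)

lemma diff_on_local: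
  assumes "open S" "g differentiable_on S" "\<And>y. y \<in> S \<Longrightarrow> f y = g y"
  shows "f differentiable_on S"
  unfolding differentiable_on_eq_differentiable_at[OF assms(1)]
proof
  fix x assume x: "x \<in> S"
  then obtain D where "(g has_derivative D) (at x)"
    using assms differentiable_on_eq_differentiable_at differentiable_def by blast
  then have "(f has_derivative D) (at x)"
    using has_derivative_transform_within_open[of g D x UNIV S f] assms x by auto
  then show "f differentiable at x" unfolding differentiable_def by blast
qed

lemma smooth_lin:
  fixes f g :: "real^'d::finite \<Rightarrow> 'b::real_normed_vector"
  assumes S: "open S" and f: "smooth_on_euc f S" and g: "smooth_on_euc g S"
  shows "\<forall>y\<in>S. pder ks (\<lambda>x. a *\<^sub>R f x + b *\<^sub>R g x) y = a *\<^sub>R pder ks f y + b *\<^sub>R pder ks g y"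
proof (induction ks)
  case Nil then show ?case by simp
next
  case (Cons k ks)
  show ?case
  proof
    fix y assume y: "y \<in> S"
    have "pder (k#ks) (\<lambda>x. a *\<^sub>R f x + b *\<^sub>R g x) y
        = pdir k (\<lambda>x. a *\<^sub>R pder ks f x + b *\<^sub>R pder ks g x) y"
      using pdir_local[OF S y, of "pder ks (\<lambda>x. a *\<^sub>R f x + b *\<^sub>R g x)"] Cons.IH by simp
    also have "\<dots> = a *\<^sub>R pder (k#ks) f y + b *\<^sub>R pder (k#ks) g y"
    proof -
      have df: "(pder ks f has_derivative frechet_derivative (pder ks f) (at y)) (at y)"
        using smooth_diff_at[OF f S y] frechet_derivative_works by blast
      have dg: "(pder ks g has_derivative frechet_derivative (pder ks g) (at y)) (at y)"
        using smooth_diff_at[OF g S y] frechet_derivative_works by blast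
      have "((\<lambda>x. a *\<^sub>R pder ks f x + b *\<^sub>R pder ks g x) has_derivative
          (\<lambda>h. a *\<^sub>R frechet_derivative (pder ks f) (at y) h + b *\<^sub>R frechet_derivative (pder ks g) (at y) h)) (at y)"
        by (intro derivative_intros df dg)
      from pdir_has[OF this, of k] show ?thesis by (simp add: pdir_def)
    qed
    finally show "pder (k#ks) (\<lambda>x. a *\<^sub>R f x + b *\<^sub>R g x) y = a *\<^sub>R pder (k#ks) f y + b *\<^sub>R pder (k#ks) g y" .
  qed
qed

lemma smooth_lin2:
  fixes f g :: "real^'d::finite \<Rightarrow> 'b::real_normed_vector"
  assumes S: "open S" and f: "smooth_on_euc f S" and g: "smooth_on_euc g S"
  shows "smooth_on_euc (\<lambda>x. a *\<^sub>R f x + b *\<^sub>R g x) S"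
  unfolding smooth_on_euc_def
proof
  fix ks
  have "(\<lambda>x. a *\<^sub>R pder ks f x + b *\<^sub>R pder ks g x) differentiable_on S"
    using f g unfolding smooth_on_euc_def by (intro derivative_intros) auto
  then show "pder ks (\<lambda>x. a *\<^sub>R f x + b *\<^sub>R g x) differentiable_on S"
    using diff_on_local[OF S] smooth_lin[OF S f g] by blast
qed

fun lp :: "'d list \<Rightarrow> ('d list \<times> 'd list) list" where
  "lp [] = [([],[])]"
| "lp (k#ks) = concat (map (\<lambda>(as,bs). [(k#as,bs),(as,k#bs)]) (lp ks))"

lemma sum_list_concat_pairs:
  "(\<Sum>p\<leftarrow>concat (map (\<lambda>(as,bs). [(k#as,bs),(as,k#bs)]) P). h p) = (\<Sum>(as,bs)\<leftarrow>P. h (k#as,bs) + h (as,k#bs))"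
  by (induction P) auto

lemma leibniz:
  fixes r :: "real^'d::finite \<Rightarrow> real" and F :: "real^'d \<Rightarrow> 'b::real_normed_vector"
  assumes S: "open S" and r: "smooth_on_euc r S" and F: "smooth_on_euc F S"
  shows "\<forall>y\<in>S. pder ks (\<lambda>x. r x *\<^sub>R F x) y = (\<Sum>(as,bs)\<leftarrow>lp ks. pder as r y *\<^sub>R pder bs F y)"
proof (induction ks)
  case Nil then show ?case by simp
next
  case (Cons k ks)
  show ?case
  proof
    fix y assume y: "y \<in> S"
    have "pder (k#ks) (\<lambda>x. r x *\<^sub>R F x) y
        = pdir k (\<lambda>x. \<Sum>(as,bs)\<leftarrow>lp ks. pder as r x *\<^sub>R pder bs F x) y"
      using pdir_local[OF S y, of "pder ks (\<lambda>x. r x *\<^sub>R F x)"] Cons.IH by simp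
    also have "\<dots> = (\<Sum>(as,bs)\<leftarrow>lp ks. pder (k#as) r y *\<^sub>R pder bs F y + pder as r y *\<^sub>R pder (k#bs) F y)"
    proof -
      have hd: "\<And>P. ((\<lambda>x. \<Sum>(as,bs)\<leftarrow>P. pder as r x *\<^sub>R pder bs F x) has_derivative
         (\<lambda>h. \<Sum>(as,bs)\<leftarrow>P. pder as r y *\<^sub>R frechet_derivative (pder bs F) (at y) h
              + frechet_derivative (pder as r) (at y) h *\<^sub>R pder bs F y)) (at y)"
      proof -
        fix P :: "('d list \<times> 'd list) list"
        show "((\<lambda>x. \<Sum>(as,bs)\<leftarrow>P. pder as r x *\<^sub>R pder bs F x) has_derivative
         (\<lambda>h. \<Sum>(as,bs)\<leftarrow>P. pder as r y *\<^sub>R frechet_derivative (pder bs F) (at y) h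
              + frechet_derivative (pder as r) (at y) h *\<^sub>R pder bs F y)) (at y)"
        proof (induction P)
          case Nil then show ?case by simp
        next
          case (Cons p P)
          obtain as bs where p: "p = (as,bs)" by fastforce
          have dr: "(pder as r has_derivative frechet_derivative (pder as r) (at y)) (at y)"
            using smooth_diff_at[OF r S y] frechet_derivative_works by blast
          have dF: "(pder bs F has_derivative frechet_derivative (pder bs F) (at y)) (at y)"
            using smooth_diff_at[OF F S y] frechet_derivative_works by blast
          show ?case unfolding p using has_derivative_add[OF has_derivative_scaleR[OF dr dF] Cons.IH]
            by simp
        qed
      qed
      from pdir_has[OF hd[of "lp ks"], of k] show ?thesis
        by (simp add: pdir_def split_def add.commute)
    qed
    also have "\<dots> = (\<Sum>(as,bs)\<leftarrow>lp (k#ks). pder as r y *\<^sub>R pder bs F y)"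
      using sum_list_concat_pairs[where k=k and P="lp ks" and h="\<lambda>p. pder (fst p) r y *\<^sub>R pder (snd p) F y"]
      by (simp add: split_def)
    finally show "pder (k#ks) (\<lambda>x. r x *\<^sub>R F x) y = (\<Sum>(as,bs)\<leftarrow>lp (k#ks). pder as r y *\<^sub>R pder bs F y)" .
  qed
qed

lemma diff_on_sum_list:
  assumes "\<And>p. p \<in> set P \<Longrightarrow> t p differentiable_on S"
  shows "(\<lambda>x. \<Sum>p\<leftarrow>P. (t p x :: 'b::real_normed_vector)) differentiable_on S"
  using assms by (induction P) (auto intro!: differentiable_on_add)

lemma smooth_mult:
  fixes r :: "real^'d::finite \<Rightarrow> real" and F :: "real^'d \<Rightarrow> 'b::real_normed_vector"
  assumes S: "open S" and r: "smooth_on_euc r S" and F: "smooth_on_euc F S"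
  shows "smooth_on_euc (\<lambda>x. r x *\<^sub>R F x) S"
  unfolding smooth_on_euc_def
proof
  fix ks
  have "(\<lambda>x. \<Sum>p\<leftarrow>lp ks. pder (fst p) r x *\<^sub>R pder (snd p) F x) differentiable_on S"
    using r F unfolding smooth_on_euc_def
    by (intro diff_on_sum_list differentiable_on_scaleR) auto
  then show "pder ks (\<lambda>x. r x *\<^sub>R F x) differentiable_on S"
    using diff_on_local[OF S, of "\<lambda>x. \<Sum>p\<leftarrow>lp ks. pder (fst p) r x *\<^sub>R pder (snd p) F x" "pder ks (\<lambda>x. r x *\<^sub>R F x)"]
      leibniz[OF S r F, of ks] by (simp add: split_def)
qed

lemma smooth_local:
  assumes Q: "open Q"
    and loc: "\<And>y. y \<in> Q \<Longrightarrow> \<exists>G g. open G \<and> y \<in> G \<and> smooth_on_euc g G \<and> (\<forall>z\<in>G. f z = g z)"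
  shows "smooth_on_euc f Q"
  unfolding smooth_on_euc_def differentiable_on_eq_differentiable_at[OF Q]
proof (intro allI ballI)
  fix ks y assume y: "y \<in> Q"
  obtain G g where G: "open G" "y \<in> G" "smooth_on_euc g G" "\<forall>z\<in>G. f z = g z"
    using loc[OF y] by blast
  have "pder ks g differentiable at y" using smooth_diff_at[OF G(3,1,2)] .
  then obtain D where "(pder ks g has_derivative D) (at y)" unfolding differentiable_def by blast
  then have "(pder ks f has_derivative D) (at y)"
    using has_derivative_transform_within_open[of "pder ks g" D y UNIV G "pder ks f"] G
      pder_local[OF G(1), of g f] by auto
  then show "pder ks f differentiable at y" unfolding differentiable_def by blast
qed

definition sn :: "(real^'d::finite) set \<Rightarrow> (real^'d \<Rightarrow> 'b::real_normed_vector) \<Rightarrow> real" where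
  "sn K g = Sup (insert 0 ((\<lambda>y. norm (g y)) ` K))"

lemma sn_bdd:
  assumes "compact K" "continuous_on K g"
  shows "bdd_above (insert 0 ((\<lambda>y. norm (g y)) ` K))"
proof -
  have "compact (g ` K)" using assms compact_continuous_image by blast
  then obtain B where "\<forall>z\<in>g ` K. norm z \<le> B" using compact_imp_bounded bounded_iff by metis
  then show ?thesis unfolding bdd_above_def
    by (intro exI[of _ "max B 0"]) auto
qed

lemma sn_ge:
  assumes "compact K" "continuous_on K g" "y \<in> K"
  shows "norm (g y) \<le> sn K g"
  unfolding sn_def using sn_bdd[OF assms(1,2)] assms(3) by (intro cSup_upper) auto

lemma sn_nonneg:
  assumes "compact K" "continuous_on K g"
  shows "0 \<le> sn K g"
  unfolding sn_def using sn_bdd[OF assms(1,2)] by (intro cSup_upper) auto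

lemma sn_le:
  assumes "0 \<le> c" "\<And>y. y \<in> K \<Longrightarrow> norm (g y) \<le> c"
  shows "sn K g \<le> c"
  unfolding sn_def using assms by (intro cSup_least) auto

lemma sn_single: "sn {a} g = norm (g a)"
  unfolding sn_def by (simp add: cSup_eq_Max)

locale mfd =
  fixes M :: "'m topology" and I :: "'i set"
    and U V :: "'i \<Rightarrow> 'm set" and \<phi> :: "'i \<Rightarrow> 'm \<Rightarrow> real^'d::finite"
    and \<rho> :: "'i \<Rightarrow> 'm \<Rightarrow> real"
  assumes atlas: "smooth_atlas M I U \<phi>"
    and chart_onto: "\<forall>i\<in>I. \<phi> i ` U i = UNIV"
    and loc_fin: "\<forall>x\<in>topspace M. \<exists>N. openin M N \<and> x \<in> N \<and> finite {i\<in>I. U i \<inter> N \<noteq> {}}"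
    and rel_compact: "\<forall>i\<in>I. compactin M (M closure_of (U i))"
    and V_open: "\<forall>i\<in>I. openin M (V i) \<and> M closure_of (V i) \<subseteq> U i"
    and pou_smooth: "\<forall>i\<in>I. mf_smooth I U \<phi> (topspace M) (\<rho> i)"
    and pou_supp: "\<forall>i\<in>I. M closure_of {x\<in>topspace M. \<rho> i x \<noteq> 0} \<subseteq> V i"
begin

definition psi :: "'i \<Rightarrow> real^'d \<Rightarrow> 'm" where "psi j = inv_into (U j) (\<phi> j)"

lemma atlas1: "\<forall>i\<in>I. openin M (U i) \<and> homeomorphic_map (subtopology M (U i)) (top_of_set (\<phi> i ` U i)) (\<phi> i)"
  using atlas unfolding smooth_atlas_def by (elim conjE)

lemma U_open: "i \<in> I \<Longrightarrow> openin M (U i)"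
  using atlas1 by simp

lemma U_top: "i \<in> I \<Longrightarrow> U i \<subseteq> topspace M"
  by (rule openin_subset[OF U_open])

lemma V_sub: "i \<in> I \<Longrightarrow> V i \<subseteq> U i"
proof -
  assume i: "i \<in> I"
  have o: "openin M (V i)" and c: "M closure_of (V i) \<subseteq> U i" using V_open i by auto
  have "V i \<subseteq> M closure_of (V i)" using closure_of_subset[OF openin_subset[OF o]] .
  then show ?thesis using c by (rule order_trans)
qed

lemma hom: "j \<in> I \<Longrightarrow> homeomorphic_map (subtopology M (U j)) euclidean (\<phi> j)"
proof -
  assume j: "j \<in> I"
  then have "homeomorphic_map (subtopology M (U j)) (top_of_set (\<phi> j ` U j)) (\<phi> j)" using atlas1 by blast
  then show ?thesis using chart_onto j by simp
qed

lemma inj: "j \<in> I \<Longrightarrow> inj_on (\<phi> j) (U j)"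
proof -
  assume j: "j \<in> I"
  have "inj_on (\<phi> j) (topspace (subtopology M (U j)))" using homeomorphic_imp_injective_map[OF hom[OF j]] .
  moreover have "topspace (subtopology M (U j)) = U j" using U_top[OF j] by (simp add: Int_absorb1)
  ultimately show ?thesis by simp
qed

lemma psi_in: "j \<in> I \<Longrightarrow> psi j y \<in> U j"
  unfolding psi_def using chart_onto by (intro inv_into_into) auto

lemma phi_psi: "j \<in> I \<Longrightarrow> \<phi> j (psi j y) = y"
  unfolding psi_def using chart_onto by (intro f_inv_into_f) auto

lemma psi_phi: "j \<in> I \<Longrightarrow> x \<in> U j \<Longrightarrow> psi j (\<phi> j x) = x"
  unfolding psi_def using inj by (simp add: inv_into_f_f)

lemma psi_top: "j \<in> I \<Longrightarrow> psi j y \<in> topspace M"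
  using psi_in U_top by (meson subsetD)


lemma img_eq: "\<phi> j ` (U j \<inter> A) = {y. psi j y \<in> A}" if "j \<in> I"
proof
  show "\<phi> j ` (U j \<inter> A) \<subseteq> {y. psi j y \<in> A}" using psi_phi[OF that] by auto
  show "{y. psi j y \<in> A} \<subseteq> \<phi> j ` (U j \<inter> A)"
  proof
    fix y assume "y \<in> {y. psi j y \<in> A}"
    then have "psi j y \<in> U j \<inter> A" using psi_in[OF that] by auto
    then show "y \<in> \<phi> j ` (U j \<inter> A)" using phi_psi[OF that, of y] by (metis image_eqI)
  qed
qed

lemma open_pre: assumes "j \<in> I" "openin M A" shows "open {y. psi j y \<in> A}"
proof -
  have oi: "openin (subtopology M (U j)) (U j \<inter> A)" using openin_subtopology_Int2[OF assms(2)] .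
  have om: "open_map (subtopology M (U j)) euclidean (\<phi> j)" by (rule homeomorphic_imp_open_map[OF hom[OF assms(1)]])
  have "openin euclidean (\<phi> j ` (U j \<inter> A))" using om[unfolded open_map_def, rule_format, OF oi] .
  then have "open (\<phi> j ` (U j \<inter> A))" by (simp only: open_openin)
  then show ?thesis by (simp only: img_eq[OF assms(1)])
qed

lemma closed_pre: assumes "j \<in> I" "closedin M C" shows "closed {y. psi j y \<in> C}"
proof -
  have eq: "{y. psi j y \<in> C} = - {y. psi j y \<in> topspace M - C}" using psi_top[OF assms(1)] by auto
  have o: "open {y. psi j y \<in> topspace M - C}"
    using open_pre[OF assms(1), of "topspace M - C"] assms(2) unfolding closedin_def by (elim conjE)
  show ?thesis unfolding eq by (rule closed_Compl[OF o])
qed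

lemma Cinf_iff: "f \<in> Cinf_space I U \<phi> W \<longleftrightarrow>
   (\<forall>j\<in>I. smooth_on_euc (f \<circ> psi j) {y. psi j y \<in> W}) \<and> (\<forall>x. x \<notin> W \<longrightarrow> f x = 0)"
  unfolding Cinf_space_def mf_smooth_def psi_def[symmetric] using img_eq by auto

lemma Cinf_zero: "(\<lambda>x. 0) \<in> Cinf_space I U \<phi> W"
  unfolding Cinf_iff by (simp add: o_def smooth_zero)

lemma Cinf_lin:
  assumes W: "openin M W" and f: "f \<in> Cinf_space I U \<phi> W" and g: "g \<in> Cinf_space I U \<phi> W"
  shows "(\<lambda>x. a *\<^sub>R f x + b *\<^sub>R g x) \<in> Cinf_space I U \<phi> W"
proof -
  have "smooth_on_euc ((\<lambda>x. a *\<^sub>R f x + b *\<^sub>R g x) \<circ> psi j) {y. psi j y \<in> W}" if j: "j \<in> I" for j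
  proof -
    have "smooth_on_euc (\<lambda>y. a *\<^sub>R (f \<circ> psi j) y + b *\<^sub>R (g \<circ> psi j) y) {y. psi j y \<in> W}"
      using f g j smooth_lin2[OF open_pre[OF j W]] unfolding Cinf_iff by blast
    then show ?thesis by (simp add: o_def)
  qed
  then have A: "\<forall>j\<in>I. smooth_on_euc ((\<lambda>x. a *\<^sub>R f x + b *\<^sub>R g x) \<circ> psi j) {y. psi j y \<in> W}" by (rule ballI)
  have B: "\<forall>x. x \<notin> W \<longrightarrow> a *\<^sub>R f x + b *\<^sub>R g x = 0" using f g unfolding Cinf_iff by simp
  show ?thesis unfolding Cinf_iff using A B by (rule conjI)
qed

lemma Cinf_sum:
  assumes W: "openin M W" and "finite A" and "\<And>a. a \<in> A \<Longrightarrow> f a \<in> Cinf_space I U \<phi> W"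
  shows "(\<lambda>x. \<Sum>a\<in>A. f a x) \<in> Cinf_space I U \<phi> W"
  using assms(2,3)
proof (induction A rule: finite_induct)
  case empty then show ?case by (simp add: Cinf_zero)
next
  case (insert a A)
  have "(\<lambda>x. 1 *\<^sub>R f a x + 1 *\<^sub>R (\<Sum>a\<in>A. f a x)) \<in> Cinf_space I U \<phi> W"
    using Cinf_lin[OF W, of "f a" "\<lambda>x. \<Sum>a\<in>A. f a x" 1 1] insert(3,4) by simp
  then show ?case using insert(1,2) by (simp add: sum.insert)
qed


lemma seminorms_cond: "(j \<in> I \<and> compact K \<and> K \<subseteq> \<phi> j ` (U j \<inter> W)) \<longleftrightarrow> (j \<in> I \<and> compact K \<and> K \<subseteq> {y. psi j y \<in> W})"
  using img_eq[of j W] by (cases "j \<in> I") auto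

lemma seminorms_eq: "Cinf_seminorms I U \<phi> W =
  {(\<lambda>f. sn K (pder ks (f \<circ> psi j))) | j K ks. j \<in> I \<and> compact K \<and> K \<subseteq> {y. psi j y \<in> W}}"
  unfolding Cinf_seminorms_def sn_def[abs_def] psi_def[symmetric] seminorms_cond ..

end

definition cbl :: "('a \<Rightarrow> 'b::real_normed_vector) set \<Rightarrow> (('a \<Rightarrow> 'b) \<Rightarrow> real) set \<Rightarrow> ('a \<Rightarrow> 'b) \<Rightarrow> real \<Rightarrow> ('a \<Rightarrow> 'b) set" where
  "cbl C F f e = {g \<in> C. \<forall>p\<in>F. p (\<lambda>x. g x - f x) < e}"

lemma cbl_mono: "F \<subseteq> F' \<Longrightarrow> e' \<le> e \<Longrightarrow> cbl C F' f e' \<subseteq> cbl C F f e"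
  unfolding cbl_def by fastforce

definition cpred where
  "cpred C SN S \<longleftrightarrow> S \<subseteq> C \<and> (\<forall>f\<in>S. \<exists>F e. finite F \<and> F \<subseteq> SN \<and> e > (0::real) \<and> cbl C F f e \<subseteq> S)"

lemma istop_cpred: "istopology (cpred C SN)"
  unfolding istopology_def
proof (rule conjI; intro allI impI)
  fix S T assume S: "cpred C SN S" and T: "cpred C SN T"
  show "cpred C SN (S \<inter> T)" unfolding cpred_def
  proof (intro conjI ballI)
    show "S \<inter> T \<subseteq> C" using S unfolding cpred_def by auto
    fix f assume f: "f \<in> S \<inter> T"
    have S': "\<forall>f\<in>S. \<exists>F e. finite F \<and> F \<subseteq> SN \<and> e > 0 \<and> cbl C F f e \<subseteq> S" using S unfolding cpred_def by (elim conjE)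
    have T': "\<forall>f\<in>T. \<exists>F e. finite F \<and> F \<subseteq> SN \<and> e > 0 \<and> cbl C F f e \<subseteq> T" using T unfolding cpred_def by (elim conjE)
    have fS: "f \<in> S" and fT: "f \<in> T" using f by simp_all
    obtain F1 e1 where 1: "finite F1" "F1 \<subseteq> SN" "e1 > 0" "cbl C F1 f e1 \<subseteq> S"
      using bspec[OF S' fS] by iprover
    obtain F2 e2 where 2: "finite F2" "F2 \<subseteq> SN" "e2 > 0" "cbl C F2 f e2 \<subseteq> T"
      using bspec[OF T' fT] by iprover
    have "cbl C (F1 \<union> F2) f (min e1 e2) \<subseteq> cbl C F1 f e1" by (rule cbl_mono) simp_all
    then have a: "cbl C (F1 \<union> F2) f (min e1 e2) \<subseteq> S" using 1(4) by (rule order_trans)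
    have "cbl C (F1 \<union> F2) f (min e1 e2) \<subseteq> cbl C F2 f e2" by (rule cbl_mono) simp_all
    then have b: "cbl C (F1 \<union> F2) f (min e1 e2) \<subseteq> T" using 2(4) by (rule order_trans)
    have c: "finite (F1 \<union> F2)" "F1 \<union> F2 \<subseteq> SN" "min e1 e2 > 0" using 1 2 by simp_all
    show "\<exists>F e. finite F \<and> F \<subseteq> SN \<and> e > 0 \<and> cbl C F f e \<subseteq> S \<inter> T"
      using a b c by (intro exI[of _ "F1 \<union> F2"] exI[of _ "min e1 e2"] conjI) (simp_all add: Int_greatest)
  qed
next
  fix K assume K: "\<forall>S\<in>K. cpred C SN S"
  show "cpred C SN (\<Union>K)" unfolding cpred_def
  proof (intro conjI ballI)
    show "\<Union>K \<subseteq> C" using K unfolding cpred_def by auto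
    fix f assume "f \<in> \<Union>K"
    then obtain S where S: "S \<in> K" "f \<in> S" by blast
    have "cpred C SN S" using K S(1) by simp
    then have S': "\<forall>f\<in>S. \<exists>F e. finite F \<and> F \<subseteq> SN \<and> e > 0 \<and> cbl C F f e \<subseteq> S" unfolding cpred_def by (elim conjE)
    obtain F e where "finite F" "F \<subseteq> SN" "e > 0" "cbl C F f e \<subseteq> S"
      using bspec[OF S' S(2)] by iprover
    then show "\<exists>F e. finite F \<and> F \<subseteq> SN \<and> e > 0 \<and> cbl C F f e \<subseteq> \<Union>K"
      using S(1) by (intro exI conjI) auto
  qed
qed

lemma Cinf_top_eq: "Cinf_top I U \<phi> W = topology (cpred (Cinf_space I U \<phi> W) (Cinf_seminorms I U \<phi> W))"
  unfolding Cinf_top_def cpred_def cbl_def ..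

lemma openin_cinf: "openin (Cinf_top I U \<phi> W) S \<longleftrightarrow> cpred (Cinf_space I U \<phi> W) (Cinf_seminorms I U \<phi> W) S"
  unfolding Cinf_top_eq by (simp only: topology_inverse'[OF istop_cpred])

lemma topspace_cinf: "topspace (Cinf_top I U \<phi> W) = Cinf_space I U \<phi> W"
proof
  have "openin (Cinf_top I U \<phi> W) (Cinf_space I U \<phi> W)"
    unfolding openin_cinf cpred_def cbl_def by (intro conjI ballI subset_refl exI[of _ "{}"] exI[of _ "1::real"]) auto
  then show "Cinf_space I U \<phi> W \<subseteq> topspace (Cinf_top I U \<phi> W)" by (rule openin_subset)
  have "openin (Cinf_top I U \<phi> W) (topspace (Cinf_top I U \<phi> W))" by (rule openin_topspace)
  then show "topspace (Cinf_top I U \<phi> W) \<subseteq> Cinf_space I U \<phi> W" unfolding openin_cinf cpred_def by (elim conjE)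
qed

lemma abs_convex_Int: "abs_convex A \<Longrightarrow> abs_convex B \<Longrightarrow> abs_convex (A \<inter> B)"
  unfolding abs_convex_def by blast

definition dnb where
  "dnb I C T W \<longleftrightarrow> (\<forall>i\<in>I. \<exists>N. openin (T i) N \<and> (\<lambda>x. 0) \<in> N \<and> N \<subseteq> {v \<in> C i. inj_at i v \<in> W})"

definition dtr where
  "dtr F W = {(\<lambda>i x. F i x + G i x) | G. G \<in> W}"

lemma dtr_mono: "W \<subseteq> W' \<Longrightarrow> dtr F W \<subseteq> dtr F W'"
  unfolding dtr_def by blast

lemma dnb_Int: assumes "dnb I C T W1" "dnb I C T W2" shows "dnb I C T (W1 \<inter> W2)"
  unfolding dnb_def
proof
  fix i assume i: "i \<in> I"
  obtain N1 where "openin (T i) N1" "(\<lambda>x. 0) \<in> N1" "N1 \<subseteq> {v \<in> C i. inj_at i v \<in> W1}" using bspec[OF assms(1)[unfolded dnb_def] i] by iprover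
  moreover obtain N2 where "openin (T i) N2" "(\<lambda>x. 0) \<in> N2" "N2 \<subseteq> {v \<in> C i. inj_at i v \<in> W2}" using bspec[OF assms(2)[unfolded dnb_def] i] by iprover
  ultimately show "\<exists>N. openin (T i) N \<and> (\<lambda>x. 0) \<in> N \<and> N \<subseteq> {v \<in> C i. inj_at i v \<in> W1 \<inter> W2}"
    by (intro exI[of _ "N1 \<inter> N2"]) auto
qed

definition dpred where
  "dpred Car I C T S \<longleftrightarrow> S \<subseteq> Car \<and> (\<forall>F\<in>S. \<exists>W. W \<subseteq> Car \<and> abs_convex W \<and> dnb I C T W \<and> dtr F W \<subseteq> S)"

lemma istop_dpred: "istopology (dpred Car I C T)"
  unfolding istopology_def
proof (rule conjI; intro allI impI)
  fix S T' assume S: "dpred Car I C T S" and T: "dpred Car I C T T'"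
  show "dpred Car I C T (S \<inter> T')" unfolding dpred_def
  proof (intro conjI ballI)
    show "S \<inter> T' \<subseteq> Car" using S unfolding dpred_def by auto
    fix F assume F: "F \<in> S \<inter> T'"
    have S': "\<forall>F\<in>S. \<exists>W. W \<subseteq> Car \<and> abs_convex W \<and> dnb I C T W \<and> dtr F W \<subseteq> S" using S unfolding dpred_def by (elim conjE)
    have T'': "\<forall>F\<in>T'. \<exists>W. W \<subseteq> Car \<and> abs_convex W \<and> dnb I C T W \<and> dtr F W \<subseteq> T'" using T unfolding dpred_def by (elim conjE)
    have FS: "F \<in> S" and FT: "F \<in> T'" using F by simp_all
    obtain W1 where 1: "W1 \<subseteq> Car" "abs_convex W1" "dnb I C T W1" "dtr F W1 \<subseteq> S"
      using bspec[OF S' FS] by iprover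
    obtain W2 where 2: "W2 \<subseteq> Car" "abs_convex W2" "dnb I C T W2" "dtr F W2 \<subseteq> T'"
      using bspec[OF T'' FT] by iprover
    have "dtr F (W1 \<inter> W2) \<subseteq> dtr F W1" by (rule dtr_mono) simp
    then have a: "dtr F (W1 \<inter> W2) \<subseteq> S" using 1(4) by (rule order_trans)
    have "dtr F (W1 \<inter> W2) \<subseteq> dtr F W2" by (rule dtr_mono) simp
    then have b: "dtr F (W1 \<inter> W2) \<subseteq> T'" using 2(4) by (rule order_trans)
    have c: "W1 \<inter> W2 \<subseteq> Car" using 1(1) by auto
    show "\<exists>W. W \<subseteq> Car \<and> abs_convex W \<and> dnb I C T W \<and> dtr F W \<subseteq> S \<inter> T'"
      using c abs_convex_Int[OF 1(2) 2(2)] dnb_Int[OF 1(3) 2(3)] a b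
      by (intro exI[of _ "W1 \<inter> W2"] conjI) (simp_all add: Int_greatest)
  qed
next
  fix K assume K: "\<forall>S\<in>K. dpred Car I C T S"
  show "dpred Car I C T (\<Union>K)" unfolding dpred_def
  proof (intro conjI ballI)
    show "\<Union>K \<subseteq> Car" using K unfolding dpred_def by auto
    fix F assume "F \<in> \<Union>K"
    then obtain S where S: "S \<in> K" "F \<in> S" by blast
    have "dpred Car I C T S" using K S(1) by simp
    then have S': "\<forall>F\<in>S. \<exists>W. W \<subseteq> Car \<and> abs_convex W \<and> dnb I C T W \<and> dtr F W \<subseteq> S" unfolding dpred_def by (elim conjE)
    obtain W where W: "W \<subseteq> Car" "abs_convex W" "dnb I C T W" "dtr F W \<subseteq> S"
      using bspec[OF S' S(2)] by iprover
    have "dtr F W \<subseteq> \<Union>K" using W(4) S(1) by auto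
    then show "\<exists>W. W \<subseteq> Car \<and> abs_convex W \<and> dnb I C T W \<and> dtr F W \<subseteq> \<Union>K"
      using W(1-3) by iprover
  qed
qed

lemma dsum_top_eq: "dsum_top I C T = topology (dpred (dsum_carrier I C) I C T)"
  unfolding dsum_top_def dpred_def dnb_def dtr_def ..

lemma openin_dsum: "openin (dsum_top I C T) S \<longleftrightarrow> dpred (dsum_carrier I C) I C T S"
  unfolding dsum_top_eq by (simp only: topology_inverse'[OF istop_dpred])

lemma dsum_lin:
  assumes lin: "\<forall>i\<in>I. \<forall>f\<in>C i. \<forall>g\<in>C i. \<forall>a b. (\<lambda>x. a *\<^sub>R f x + b *\<^sub>R g x) \<in> C i"
    and F: "F \<in> dsum_carrier I C" and G: "G \<in> dsum_carrier I C"
  shows "(\<lambda>i x. a *\<^sub>R F i x + b *\<^sub>R G i x) \<in> dsum_carrier I C"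
proof -
  have F1: "\<forall>i\<in>I. F i \<in> C i" "\<forall>i. i \<notin> I \<longrightarrow> F i = (\<lambda>x. 0)" "finite {i\<in>I. F i \<noteq> (\<lambda>x. 0)}"
    using F unfolding dsum_carrier_def by auto
  have G1: "\<forall>i\<in>I. G i \<in> C i" "\<forall>i. i \<notin> I \<longrightarrow> G i = (\<lambda>x. 0)" "finite {i\<in>I. G i \<noteq> (\<lambda>x. 0)}"
    using G unfolding dsum_carrier_def by auto
  have a: "\<forall>i\<in>I. (\<lambda>x. a *\<^sub>R F i x + b *\<^sub>R G i x) \<in> C i" using lin F1(1) G1(1) by simp
  have b: "\<forall>i. i \<notin> I \<longrightarrow> (\<lambda>x. a *\<^sub>R F i x + b *\<^sub>R G i x) = (\<lambda>x. 0)" using F1(2) G1(2) by simp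
  have "{i\<in>I. (\<lambda>x. a *\<^sub>R F i x + b *\<^sub>R G i x) \<noteq> (\<lambda>x. 0)} \<subseteq> {i\<in>I. F i \<noteq> (\<lambda>x. 0)} \<union> {i\<in>I. G i \<noteq> (\<lambda>x. 0)}"
    by auto
  then have c: "finite {i\<in>I. (\<lambda>x. a *\<^sub>R F i x + b *\<^sub>R G i x) \<noteq> (\<lambda>x. 0)}"
    using F1(3) G1(3) by (meson finite_Un finite_subset)
  show ?thesis unfolding dsum_carrier_def using a b c by simp
qed

lemma inj_at_carrier:
  assumes zero: "\<forall>j\<in>I. (\<lambda>x. 0) \<in> C j" and i: "i \<in> I" and v: "v \<in> C i"
  shows "inj_at i v \<in> dsum_carrier I C"
proof -
  have "{j\<in>I. inj_at i v j \<noteq> (\<lambda>x. 0)} \<subseteq> {i}" unfolding inj_at_def by auto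
  then have "finite {j\<in>I. inj_at i v j \<noteq> (\<lambda>x. 0)}" by (rule finite_subset) simp
  moreover have "\<forall>j\<in>I. inj_at i v j \<in> C j" using zero v unfolding inj_at_def by simp
  moreover have "\<forall>j. j \<notin> I \<longrightarrow> inj_at i v j = (\<lambda>x. 0)" using i unfolding inj_at_def by auto
  ultimately show ?thesis unfolding dsum_carrier_def by simp
qed

lemma abs_convex_carrier:
  assumes lin: "\<forall>i\<in>I. \<forall>f\<in>C i. \<forall>g\<in>C i. \<forall>a b. (\<lambda>x. a *\<^sub>R f x + b *\<^sub>R g x) \<in> C i"
  shows "abs_convex (dsum_carrier I C)"
  unfolding abs_convex_def
  by (intro ballI allI impI) (rule dsum_lin[OF lin])

lemma topspace_dsum:
  assumes lin: "\<forall>i\<in>I. \<forall>f\<in>C i. \<forall>g\<in>C i. \<forall>a b. (\<lambda>x. a *\<^sub>R f x + b *\<^sub>R g x) \<in> C i"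
    and zero: "\<forall>j\<in>I. (\<lambda>x. 0) \<in> C j"
    and top: "\<forall>i\<in>I. topspace (T i) = C i"
  shows "topspace (dsum_top I C T) = dsum_carrier I C"
proof
  have "dnb I C T (dsum_carrier I C)" unfolding dnb_def
  proof
    fix i assume i: "i \<in> I"
    have "openin (T i) (C i)" using openin_topspace[of "T i"] top i by simp
    moreover have "C i \<subseteq> {v \<in> C i. inj_at i v \<in> dsum_carrier I C}" using inj_at_carrier[OF zero i] by auto
    ultimately show "\<exists>N. openin (T i) N \<and> (\<lambda>x. 0) \<in> N \<and> N \<subseteq> {v \<in> C i. inj_at i v \<in> dsum_carrier I C}"
      using zero i by (intro exI[of _ "C i"] conjI) auto
  qed
  moreover have "\<And>F. F \<in> dsum_carrier I C \<Longrightarrow> dtr F (dsum_carrier I C) \<subseteq> dsum_carrier I C"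
    unfolding dtr_def using dsum_lin[OF lin, of _ _ 1 1] by auto
  ultimately have "openin (dsum_top I C T) (dsum_carrier I C)"
    unfolding openin_dsum dpred_def using abs_convex_carrier[OF lin]
    by (intro conjI subset_refl ballI exI[of _ "dsum_carrier I C"]) simp_all
  then show "dsum_carrier I C \<subseteq> topspace (dsum_top I C T)" by (rule openin_subset)
  have "openin (dsum_top I C T) (topspace (dsum_top I C T))" by (rule openin_topspace)
  then show "topspace (dsum_top I C T) \<subseteq> dsum_carrier I C" unfolding openin_dsum dpred_def by (elim conjE)
qed

lemma abs_convex_sum:
  fixes W :: "('i \<Rightarrow> 'm \<Rightarrow> 'v::real_vector) set"
  assumes W: "abs_convex W" and z: "(\<lambda>i x. 0) \<in> W"
  shows "finite A \<Longrightarrow> (\<forall>a\<in>A. w a \<in> W) \<Longrightarrow> (\<Sum>a\<in>A. \<bar>c a\<bar>) \<le> 1 \<Longrightarrow> (\<lambda>i x. \<Sum>a\<in>A. c a *\<^sub>R w a i x) \<in> W"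
proof (induction A arbitrary: c rule: finite_induct)
  case empty then show ?case using z by simp
next
  case (insert a A)
  let ?s = "\<Sum>a\<in>A. \<bar>c a\<bar>"
  have s0: "?s \<ge> 0" by (simp add: sum_nonneg)
  have sle: "\<bar>c a\<bar> + ?s \<le> 1" using insert by simp
  have wa: "w a \<in> W" using insert by simp
  have X: "\<And>F G a b. F\<in>W \<Longrightarrow> G\<in>W \<Longrightarrow> \<bar>a\<bar>+\<bar>b\<bar> \<le> 1 \<Longrightarrow> (\<lambda>i x. a *\<^sub>R F i x + b *\<^sub>R G i x) \<in> W"
    by (rule W[unfolded abs_convex_def, rule_format])
  have sumins: "\<And>i x. (\<Sum>b\<in>insert a A. c b *\<^sub>R w b i x) = c a *\<^sub>R w a i x + (\<Sum>b\<in>A. c b *\<^sub>R w b i x)"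
    using insert(1,2) by simp
  show ?case
  proof (cases "?s = 0")
    case True
    then have "\<forall>b\<in>A. \<bar>c b\<bar> = 0" using insert(1) by (simp add: sum_nonneg_eq_0_iff)
    then have z2: "\<And>i x. (\<Sum>b\<in>A. c b *\<^sub>R w b i x) = 0" by simp
    have "(\<lambda>i x. c a *\<^sub>R w a i x + 0 *\<^sub>R (0::'v)) \<in> W"
      using X[OF wa z, of "c a" 0] sle s0 by simp
    then show ?thesis by (simp add: sumins z2)
  next
    case False
    then have sp: "?s > 0" using s0 by linarith
    define c' where "c' b = c b / ?s" for b
    have "(\<Sum>b\<in>A. \<bar>c' b\<bar>) = (\<Sum>b\<in>A. \<bar>c b\<bar>) / ?s"
      unfolding c'_def using sp by (simp add: sum_divide_distrib[symmetric])
    then have "(\<Sum>b\<in>A. \<bar>c' b\<bar>) \<le> 1" using sp by simp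
    then have Z: "(\<lambda>i x. \<Sum>b\<in>A. c' b *\<^sub>R w b i x) \<in> W" using insert by simp
    have "(\<lambda>i x. c a *\<^sub>R w a i x + ?s *\<^sub>R (\<Sum>b\<in>A. c' b *\<^sub>R w b i x)) \<in> W"
      using X[OF wa Z, of "c a" ?s] sle s0 by simp
    moreover have "\<And>i x. ?s *\<^sub>R (\<Sum>b\<in>A. c' b *\<^sub>R w b i x) = (\<Sum>b\<in>A. c b *\<^sub>R w b i x)"
      unfolding c'_def scaleR_sum_right using sp by simp
    ultimately show ?thesis by (simp add: sumins)
  qed
qed

lemma cinf_cont:
  fixes L :: "('m \<Rightarrow> real^'n::finite) \<Rightarrow> ('m \<Rightarrow> real^'n)"
    and I :: "'i set" and U :: "'i \<Rightarrow> 'm set" and \<phi> :: "'i \<Rightarrow> 'm \<Rightarrow> real^'d::finite"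
    and W1 W2 :: "'m set"
  defines "C1 \<equiv> Cinf_space I U \<phi> W1" and "C2 \<equiv> Cinf_space I U \<phi> W2"
    and "SN1 \<equiv> Cinf_seminorms I U \<phi> W1" and "SN2 \<equiv> Cinf_seminorms I U \<phi> W2"
  assumes maps: "\<forall>v\<in>C1. L v \<in> C2"
    and sub: "\<forall>g\<in>C1. \<forall>v\<in>C1. (\<lambda>x. g x - v x) \<in> C1"
    and diff: "\<forall>g\<in>C1. \<forall>v\<in>C1. L (\<lambda>x. g x - v x) = (\<lambda>x. L g x - L v x)"
    and bound: "\<forall>p\<in>SN2. \<exists>R. (\<forall>r\<in>set R. fst r \<ge> 0 \<and> snd r \<in> SN1) \<and> (\<forall>w\<in>C1. p (L w) \<le> (\<Sum>r\<leftarrow>R. fst r * snd r w))"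
  shows "continuous_map (Cinf_top I U \<phi> W1) (Cinf_top I U \<phi> W2) L"
  unfolding continuous_map topspace_cinf C1_def[symmetric] C2_def[symmetric]
proof (intro conjI allI impI)
  show "L ` C1 \<subseteq> C2" using maps by auto
  fix O' :: "('m \<Rightarrow> real^'n) set" assume "openin (Cinf_top I U \<phi> W2) O'"
  then have O': "cpred C2 SN2 O'" unfolding openin_cinf C2_def SN2_def .
  show "openin (Cinf_top I U \<phi> W1) {x \<in> C1. L x \<in> O'}"
    unfolding openin_cinf C1_def[symmetric] SN1_def[symmetric] cpred_def
  proof (intro conjI ballI)
    show "{x \<in> C1. L x \<in> O'} \<subseteq> C1" by auto
    fix v0 assume v0': "v0 \<in> {x \<in> C1. L x \<in> O'}"
    then have v0: "v0 \<in> C1" "L v0 \<in> O'" by simp_all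
    have "\<forall>f\<in>O'. \<exists>F e. finite F \<and> F \<subseteq> SN2 \<and> e > 0 \<and> cbl C2 F f e \<subseteq> O'" using O' unfolding cpred_def by (elim conjE)
    then obtain F e where F: "finite F" "F \<subseteq> SN2" "e > 0" "cbl C2 F (L v0) e \<subseteq> O'"
      using bspec[OF _ v0(2)] by iprover
    have "\<forall>p\<in>F. \<exists>R. (\<forall>r\<in>set R. fst r \<ge> 0 \<and> snd r \<in> SN1) \<and> (\<forall>w\<in>C1. p (L w) \<le> (\<Sum>r\<leftarrow>R. fst r * snd r w))"
      by (intro ballI) (rule bspec[OF bound], rule subsetD[OF F(2)])
    from bchoice[OF this] obtain Rf where Rf0: "\<forall>p\<in>F. (\<forall>r\<in>set (Rf p). fst r \<ge> 0 \<and> snd r \<in> SN1) \<and> (\<forall>w\<in>C1. p (L w) \<le> (\<Sum>r\<leftarrow>Rf p. fst r * snd r w))" ..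
    have Rf: "\<And>p. p \<in> F \<Longrightarrow> (\<forall>r\<in>set (Rf p). fst r \<ge> 0 \<and> snd r \<in> SN1) \<and> (\<forall>w\<in>C1. p (L w) \<le> (\<Sum>r\<leftarrow>Rf p. fst r * snd r w))"
      by (rule bspec[OF Rf0])
    define F' where "F' = (\<Union>p\<in>F. snd ` set (Rf p))"
    define cs where "cs p = (\<Sum>r\<leftarrow>Rf p. fst r)" for p
    define ct where "ct = (\<Sum>p\<in>F. cs p)"
    define e' where "e' = e / (1 + ct)"
    have cs0: "cs p \<ge> 0" if "p \<in> F" for p unfolding cs_def using Rf[OF that] by (intro sum_list_nonneg) auto
    have ct0: "ct \<ge> 0" unfolding ct_def using cs0 by (simp add: sum_nonneg)
    have csct: "cs p \<le> ct" if "p \<in> F" for p unfolding ct_def using F(1) that cs0 by (intro member_le_sum) auto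
    have e'0: "e' > 0" unfolding e'_def using F(3) ct0 by simp
    have cte: "ct * e' < e"
    proof -
      have "ct * e' = e * (ct / (1 + ct))" unfolding e'_def using ct0 by (simp add: field_simps)
      also have "\<dots> < e * 1" using F(3) ct0 by (intro mult_strict_left_mono) simp_all
      finally show ?thesis by simp
    qed
    have fin: "finite F'" unfolding F'_def using F(1) by simp
    have sub1: "F' \<subseteq> SN1" unfolding F'_def
    proof (intro UN_least subsetI)
      fix p q assume p: "p \<in> F" and "q \<in> snd ` set (Rf p)"
      then obtain r where r: "r \<in> set (Rf p)" "q = snd r" by (elim imageE)
      then show "q \<in> SN1" using Rf[OF p] by simp
    qed
    have "cbl C1 F' v0 e' \<subseteq> {x \<in> C1. L x \<in> O'}"
    proof
      fix g assume "g \<in> cbl C1 F' v0 e'"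
      then have g: "g \<in> C1" "\<And>q. q \<in> F' \<Longrightarrow> q (\<lambda>x. g x - v0 x) < e'" unfolding cbl_def by auto
      define w where "w = (\<lambda>x. g x - v0 x)"
      have w: "w \<in> C1" unfolding w_def using sub g(1) v0(1) by simp
      have "L g \<in> cbl C2 F (L v0) e" unfolding cbl_def
      proof (intro CollectI conjI ballI)
        show "L g \<in> C2" using maps g(1) by simp
        fix p assume p: "p \<in> F"
        have "p (\<lambda>x. L g x - L v0 x) = p (L w)" unfolding w_def using diff g(1) v0(1) by simp
        also have "\<dots> \<le> (\<Sum>r\<leftarrow>Rf p. fst r * snd r w)" using Rf[OF p] w by simp
        also have "\<dots> \<le> (\<Sum>r\<leftarrow>Rf p. fst r * e')"
        proof (rule sum_list_mono)
          fix r assume r: "r \<in> set (Rf p)"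
          have "snd r \<in> F'" unfolding F'_def using p r by (intro UN_I imageI)
          then have "snd r w < e'" using g(2) unfolding w_def by simp
          moreover have "fst r \<ge> 0" using Rf[OF p] r by simp
          ultimately show "fst r * snd r w \<le> fst r * e'" by (simp add: mult_left_mono)
        qed
        also have "\<dots> = cs p * e'" unfolding cs_def by (simp add: sum_list_mult_const)
        also have "\<dots> \<le> ct * e'" using csct[OF p] e'0 by (simp add: mult_right_mono)
        also have "\<dots> < e" by (rule cte)
        finally show "p (\<lambda>x. L g x - L v0 x) < e" .
      qed
      then show "g \<in> {x \<in> C1. L x \<in> O'}" using F(4) g(1) by (simp add: subsetD)
    qed
    then show "\<exists>F e. finite F \<and> F \<subseteq> SN1 \<and> e > 0 \<and> cbl C1 F v0 e \<subseteq> {x \<in> C1. L x \<in> O'}"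
      using fin sub1 e'0 by (intro exI[of _ F'] exI[of _ e'] conjI)
  qed
qed

lemma norm_sum_list_le: "norm (\<Sum>p\<leftarrow>P. (f p :: 'b::real_normed_vector)) \<le> (\<Sum>p\<leftarrow>P. norm (f p))"
  by (induction P) (auto intro: order_trans[OF norm_triangle_ineq])

context mfd begin

definition Jset where "Jset i = {j\<in>I. U j \<inter> U i \<noteq> {}}"

lemma J_sub: "Jset i \<subseteq> I" unfolding Jset_def by auto

lemma J_sym: "k \<in> Jset i \<longleftrightarrow> i \<in> Jset k" if "i \<in> I" "k \<in> I"
  unfolding Jset_def using that by auto

lemma U_ne: "i \<in> I \<Longrightarrow> U i \<noteq> {}"
  using chart_onto by force

lemma J_self: "i \<in> I \<Longrightarrow> i \<in> Jset i"
  unfolding Jset_def using U_ne by simp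

lemma J_fin: assumes i: "i \<in> I" shows "finite (Jset i)"
proof -
  have "\<forall>x\<in>topspace M. \<exists>N. openin M N \<and> x \<in> N \<and> finite {i\<in>I. U i \<inter> N \<noteq> {}}" by (rule loc_fin)
  from bchoice[OF this] obtain N where N: "\<forall>x\<in>topspace M. openin M (N x) \<and> x \<in> N x \<and> finite {i\<in>I. U i \<inter> N x \<noteq> {}}" ..
  let ?cl = "M closure_of (U i)"
  have cpt: "compactin M ?cl" using rel_compact i by simp
  have clsub: "?cl \<subseteq> topspace M" by (rule closure_of_subset_topspace)
  have "(\<forall>Q\<in>N ` ?cl. openin M Q) \<and> ?cl \<subseteq> \<Union>(N ` ?cl)"
  proof
    show "\<forall>Q\<in>N ` ?cl. openin M Q" using N clsub by auto
    show "?cl \<subseteq> \<Union>(N ` ?cl)" using N clsub by auto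
  qed
  moreover have "\<forall>\<U>. (\<forall>Q\<in>\<U>. openin M Q) \<and> ?cl \<subseteq> \<Union>\<U> \<longrightarrow> (\<exists>\<F>. finite \<F> \<and> \<F> \<subseteq> \<U> \<and> ?cl \<subseteq> \<Union>\<F>)"
    using cpt unfolding compactin_def by (elim conjE)
  ultimately have "\<exists>\<F>. finite \<F> \<and> \<F> \<subseteq> N ` ?cl \<and> ?cl \<subseteq> \<Union>\<F>" by simp
  then obtain FF where FF: "finite FF" "FF \<subseteq> N ` ?cl" "?cl \<subseteq> \<Union>FF" by iprover
  obtain X where X: "X \<subseteq> ?cl" "finite X" "FF = N ` X" using finite_subset_image[OF FF(1,2)] by auto
  have "Jset i \<subseteq> (\<Union>x\<in>X. {j\<in>I. U j \<inter> N x \<noteq> {}})"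
  proof
    fix j assume "j \<in> Jset i"
    then obtain u where u: "j \<in> I" "u \<in> U j" "u \<in> U i" unfolding Jset_def by auto
    have "u \<in> ?cl" using closure_of_subset[OF U_top[OF i]] u(3) by auto
    then obtain x where "x \<in> X" "u \<in> N x" using FF(3) X(3) by auto
    then show "j \<in> (\<Union>x\<in>X. {j\<in>I. U j \<inter> N x \<noteq> {}})" using u by auto
  qed
  moreover have "finite (\<Union>x\<in>X. {j\<in>I. U j \<inter> N x \<noteq> {}})"
    using X N clsub by (intro finite_UN_I) auto
  ultimately show ?thesis by (rule finite_subset)
qed

definition Cs where "Cs l = M closure_of {x\<in>topspace M. \<rho> l x \<noteq> 0}"

lemma Cs_closed: "closedin M (Cs l)" unfolding Cs_def by simp

lemma Cs_sub: "l \<in> I \<Longrightarrow> Cs l \<subseteq> V l" unfolding Cs_def using pou_supp by simp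

lemma rho_zero: "x \<in> topspace M \<Longrightarrow> x \<notin> Cs l \<Longrightarrow> \<rho> l x = 0"
  unfolding Cs_def using closure_of_subset[of "{x\<in>topspace M. \<rho> l x \<noteq> 0}" M] by auto

lemma rho_sm: assumes "l \<in> I" "j \<in> I" shows "smooth_on_euc (\<lambda>z. c * \<rho> l (psi j z)) S"
proof -
  have "smooth_on_euc (\<rho> l \<circ> psi j) {y. psi j y \<in> topspace M}"
  proof -
    have "\<forall>i\<in>I. \<forall>j\<in>I. smooth_on_euc (\<rho> i \<circ> psi j) (\<phi> j ` (U j \<inter> topspace M))"
      using pou_smooth unfolding mf_smooth_def psi_def[symmetric] .
    then have "smooth_on_euc (\<rho> l \<circ> psi j) (\<phi> j ` (U j \<inter> topspace M))" using assms by simp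
    then show ?thesis by (simp only: img_eq[OF assms(2)])
  qed
  then have s: "smooth_on_euc (\<rho> l \<circ> psi j) UNIV" using psi_top[OF assms(2)] by simp
  have "smooth_on_euc (\<lambda>z. c *\<^sub>R (\<rho> l \<circ> psi j) z + 0 *\<^sub>R (\<rho> l \<circ> psi j) z) UNIV"
    by (rule smooth_lin2[OF open_UNIV s s])
  then have "smooth_on_euc (\<lambda>z. c * \<rho> l (psi j z)) UNIV" by simp
  then show ?thesis by (rule smooth_subset) simp
qed

definition hh :: "real \<Rightarrow> 'i \<Rightarrow> 'i \<Rightarrow> ('m \<Rightarrow> 'v::real_vector) \<Rightarrow> 'm \<Rightarrow> 'v" where "hh c k l w = (\<lambda>x. if x \<in> V k \<and> x \<in> V l then (c * \<rho> l x) *\<^sub>R w x else 0)"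

lemma hh_A: assumes "psi j z \<in> V k \<inter> V l" shows "hh c k l w (psi j z) = (c * \<rho> l (psi j z)) *\<^sub>R w (psi j z)"
  using assms unfolding hh_def by simp

lemma hh_B: assumes "j \<in> I" "psi j z \<in> V k - Cs l" shows "hh c k l w (psi j z) = 0"
proof -
  have "\<rho> l (psi j z) = 0" using assms rho_zero[OF psi_top[OF assms(1)]] by simp
  then show ?thesis unfolding hh_def by simp
qed

lemma VmC_open: "k \<in> I \<Longrightarrow> openin M (V k - Cs l)"
  using V_open Cs_closed by (simp add: openin_diff)

lemma VV_open: "k \<in> I \<Longrightarrow> l \<in> I \<Longrightarrow> openin M (V k \<inter> V l)"
  using V_open by (simp add: openin_Int)

lemma Cinf_sm: "w \<in> Cinf_space I U \<phi> W \<Longrightarrow> j \<in> I \<Longrightarrow> smooth_on_euc (\<lambda>z. w (psi j z)) {y. psi j y \<in> W}"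
  unfolding Cinf_iff by (simp add: o_def)

lemma hh_sm_A:
  assumes k: "k \<in> I" and l: "l \<in> I" and j: "j \<in> I" and w: "w \<in> Cinf_space I U \<phi> (U l)"
  shows "smooth_on_euc (\<lambda>z. (c * \<rho> l (psi j z)) *\<^sub>R w (psi j z)) {y. psi j y \<in> V k \<inter> V l}"
proof (rule smooth_mult)
  show "open {y. psi j y \<in> V k \<inter> V l}" using open_pre[OF j VV_open[OF k l]] .
  show "smooth_on_euc (\<lambda>z. c * \<rho> l (psi j z)) {y. psi j y \<in> V k \<inter> V l}" by (rule rho_sm[OF l j])
  have "{y. psi j y \<in> V k \<inter> V l} \<subseteq> {y. psi j y \<in> U l}" using V_sub[OF l] by auto
  then show "smooth_on_euc (\<lambda>z. w (psi j z)) {y. psi j y \<in> V k \<inter> V l}"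
    using Cinf_sm[OF w j] by (rule smooth_subset[rotated])
qed

lemma hh_mem:
  assumes k: "k \<in> I" and l: "l \<in> I" and w: "w \<in> Cinf_space I U \<phi> (U l)"
  shows "hh c k l w \<in> Cinf_space I U \<phi> (V k)"
  unfolding Cinf_iff
proof (intro conjI ballI allI impI)
  fix x assume "x \<notin> V k" then show "hh c k l w x = 0" unfolding hh_def by simp
next
  fix j assume j: "j \<in> I"
  show "smooth_on_euc (hh c k l w \<circ> psi j) {y. psi j y \<in> V k}"
  proof (rule smooth_local)
    show "open {y. psi j y \<in> V k}" using open_pre[OF j] V_open k by simp
    fix y assume y: "y \<in> {y. psi j y \<in> V k}"
    show "\<exists>G g. open G \<and> y \<in> G \<and> smooth_on_euc g G \<and> (\<forall>z\<in>G. (hh c k l w \<circ> psi j) z = g z)"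
    proof (cases "psi j y \<in> Cs l")
      case True
      then have "psi j y \<in> V l" using Cs_sub[OF l] by auto
      have eq: "\<forall>z\<in>{y. psi j y \<in> V k \<inter> V l}. (hh c k l w \<circ> psi j) z = (c * \<rho> l (psi j z)) *\<^sub>R w (psi j z)"
        unfolding hh_def by simp
      have "y \<in> {y. psi j y \<in> V k \<inter> V l}" using y \<open>psi j y \<in> V l\<close> by simp
      then show ?thesis using hh_sm_A[OF k l j w, of c] open_pre[OF j VV_open[OF k l]] eq
        by (intro exI[of _ "{y. psi j y \<in> V k \<inter> V l}"] exI[of _ "\<lambda>z. (c * \<rho> l (psi j z)) *\<^sub>R w (psi j z)"] conjI)
    next
      case False
      have eq: "\<forall>z\<in>{y. psi j y \<in> V k - Cs l}. (hh c k l w \<circ> psi j) z = 0"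
      proof
        fix z assume "z \<in> {y. psi j y \<in> V k - Cs l}"
        then show "(hh c k l w \<circ> psi j) z = 0" using hh_B[OF j, of z k l c w] by simp
      qed
      have "y \<in> {y. psi j y \<in> V k - Cs l}" using y False by simp
      then show ?thesis using smooth_zero open_pre[OF j VmC_open[OF k]] eq
        by (intro exI[of _ "{y. psi j y \<in> V k - Cs l}"] exI[of _ "\<lambda>z. 0"] conjI)
    qed
  qed
qed

end

context mfd begin

lemma Cinf_sub: "openin M W \<Longrightarrow> g \<in> Cinf_space I U \<phi> W \<Longrightarrow> v \<in> Cinf_space I U \<phi> W \<Longrightarrow> (\<lambda>x. g x - v x) \<in> Cinf_space I U \<phi> W"
  using Cinf_lin[of W g v 1 "-1"] by simp

lemma hh_bound:
  assumes k: "k \<in> I" and l: "l \<in> I" and j: "j \<in> I" and K: "compact K" "K \<subseteq> {y. psi j y \<in> V k}"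
    and w: "w \<in> Cinf_space I U \<phi> (U l)"
  shows "sn K (pder ks (hh c k l w \<circ> psi j)) \<le>
    (\<Sum>q\<leftarrow>lp ks. sn (K \<inter> {y. psi j y \<in> Cs l}) (pder (fst q) (\<lambda>z. c * \<rho> l (psi j z))) *
                 sn (K \<inter> {y. psi j y \<in> Cs l}) (pder (snd q) (w \<circ> psi j)))"
proof -
  define K' where "K' = K \<inter> {y. psi j y \<in> Cs l}"
  define r where "r = (\<lambda>z. c * \<rho> l (psi j z))"
  define A where "A = {y. psi j y \<in> V k \<inter> V l}"
  define B where "B = {y. psi j y \<in> V k - Cs l}"
  have Aopen: "open A" unfolding A_def using open_pre[OF j VV_open[OF k l]] .
  have Bopen: "open B" unfolding B_def using open_pre[OF j VmC_open[OF k]] .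
  have K'cpt: "compact K'" unfolding K'_def using K(1) closed_pre[OF j Cs_closed] by (rule compact_Int_closed)
  have K'A: "K' \<subseteq> A" unfolding K'_def A_def using K(2) Cs_sub[OF l] by auto
  have wpsi: "(w \<circ> psi j) = (\<lambda>z. w (psi j z))" by (simp add: o_def)
  have smw: "smooth_on_euc (w \<circ> psi j) {y. psi j y \<in> U l}" using Cinf_sm[OF w j] by (simp add: wpsi)
  have AU: "A \<subseteq> {y. psi j y \<in> U l}" unfolding A_def using V_sub[OF l] by auto
  have smwA: "smooth_on_euc (w \<circ> psi j) A" using smw AU by (rule smooth_subset)
  have smr: "smooth_on_euc r UNIV" unfolding r_def by (rule rho_sm[OF l j])
  have smrA: "smooth_on_euc r A" unfolding r_def by (rule rho_sm[OF l j])
  have cont1: "continuous_on K' (pder as r)" for as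
  proof -
    have "pder as r differentiable_on UNIV" using smr unfolding smooth_on_euc_def by simp
    then show ?thesis using differentiable_imp_continuous_on continuous_on_subset by blast
  qed
  have cont2: "continuous_on K' (pder bs (w \<circ> psi j))" for bs
  proof -
    have "pder bs (w \<circ> psi j) differentiable_on A" using smwA unfolding smooth_on_euc_def by simp
    then have "continuous_on A (pder bs (w \<circ> psi j))" by (rule differentiable_imp_continuous_on)
    then show ?thesis using K'A by (rule continuous_on_subset)
  qed
  have nn: "0 \<le> (\<Sum>q\<leftarrow>lp ks. sn K' (pder (fst q) r) * sn K' (pder (snd q) (w \<circ> psi j)))"
    using sn_nonneg[OF K'cpt cont1] sn_nonneg[OF K'cpt cont2]
    by (intro sum_list_nonneg) auto
  have eqA: "\<And>z. z \<in> A \<Longrightarrow> (hh c k l w \<circ> psi j) z = r z *\<^sub>R (w \<circ> psi j) z"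
    unfolding A_def r_def hh_def by simp
  have eqB: "\<And>z. z \<in> B \<Longrightarrow> (hh c k l w \<circ> psi j) z = 0"
  proof -
    fix z assume "z \<in> B"
    then show "(hh c k l w \<circ> psi j) z = 0" unfolding B_def using hh_B[OF j, of z k l c w] by simp
  qed
  have "sn K (pder ks (hh c k l w \<circ> psi j)) \<le> (\<Sum>q\<leftarrow>lp ks. sn K' (pder (fst q) r) * sn K' (pder (snd q) (w \<circ> psi j)))"
  proof (rule sn_le[OF nn])
    fix y assume y: "y \<in> K"
    show "norm (pder ks (hh c k l w \<circ> psi j) y) \<le> (\<Sum>q\<leftarrow>lp ks. sn K' (pder (fst q) r) * sn K' (pder (snd q) (w \<circ> psi j)))"
    proof (cases "y \<in> K'")
      case True
      then have yA: "y \<in> A" using K'A by auto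
      have "pder ks (hh c k l w \<circ> psi j) y = pder ks (\<lambda>z. r z *\<^sub>R (w \<circ> psi j) z) y"
        by (rule pder_local[OF Aopen eqA yA])
      also have "\<dots> = (\<Sum>(as,bs)\<leftarrow>lp ks. pder as r y *\<^sub>R pder bs (w \<circ> psi j) y)"
        using leibniz[OF Aopen smrA smwA, of ks] yA by blast
      finally have e: "pder ks (hh c k l w \<circ> psi j) y = (\<Sum>q\<leftarrow>lp ks. pder (fst q) r y *\<^sub>R pder (snd q) (w \<circ> psi j) y)"
        by (simp add: split_def)
      have "norm (pder ks (hh c k l w \<circ> psi j) y) \<le> (\<Sum>q\<leftarrow>lp ks. norm (pder (fst q) r y *\<^sub>R pder (snd q) (w \<circ> psi j) y))"
        unfolding e by (rule norm_sum_list_le)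
      also have "\<dots> \<le> (\<Sum>q\<leftarrow>lp ks. sn K' (pder (fst q) r) * sn K' (pder (snd q) (w \<circ> psi j)))"
      proof (rule sum_list_mono)
        fix q :: "'d list \<times> 'd list"
        have a: "norm (pder (fst q) r y) \<le> sn K' (pder (fst q) r)" using sn_ge[OF K'cpt cont1 True] .
        have b: "norm (pder (snd q) (w \<circ> psi j) y) \<le> sn K' (pder (snd q) (w \<circ> psi j))" using sn_ge[OF K'cpt cont2 True] .
        show "norm (pder (fst q) r y *\<^sub>R pder (snd q) (w \<circ> psi j) y) \<le> sn K' (pder (fst q) r) * sn K' (pder (snd q) (w \<circ> psi j))"
          using mult_mono[OF a b sn_nonneg[OF K'cpt cont1] norm_ge_zero] by simp
      qed
      finally show ?thesis .
    next
      case False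
      then have yB: "y \<in> B" using y K(2) unfolding K'_def B_def by auto
      have "pder ks (hh c k l w \<circ> psi j) y = pder ks (\<lambda>z. 0) y"
        by (rule pder_local[OF Bopen eqB yB])
      then show ?thesis using nn by (simp add: pder_zero)
    qed
  qed
  then show ?thesis unfolding K'_def r_def .
qed

lemma hh_semibound:
  assumes k: "k \<in> I" and l: "l \<in> I"
  shows "\<forall>p\<in>Cinf_seminorms I U \<phi> (V k). \<exists>R. (\<forall>r\<in>set R. fst r \<ge> 0 \<and> snd r \<in> Cinf_seminorms I U \<phi> (U l)) \<and>
          (\<forall>w\<in>Cinf_space I U \<phi> (U l). p (hh c k l w) \<le> (\<Sum>r\<leftarrow>R. fst r * snd r (w :: 'm \<Rightarrow> real^'n::finite)))"
  proof
    fix p :: "('m \<Rightarrow> real^'n) \<Rightarrow> real" assume "p \<in> Cinf_seminorms I U \<phi> (V k)"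
    then obtain j K ks where p: "p = (\<lambda>f. sn K (pder ks (f \<circ> psi j)))" and j: "j \<in> I" and K: "compact K" "K \<subseteq> {y. psi j y \<in> V k}"
      unfolding seminorms_eq by blast
    define K' where "K' = K \<inter> {y. psi j y \<in> Cs l}"
    define r where "r = (\<lambda>z. c * \<rho> l (psi j z))"
    define R where "R = map (\<lambda>q. (sn K' (pder (fst q) r), (\<lambda>f. sn K' (pder (snd q) (f \<circ> psi j))) :: ('m \<Rightarrow> real^'n) \<Rightarrow> real)) (lp ks)"
    have K'cpt: "compact K'" unfolding K'_def using K(1) closed_pre[OF j Cs_closed] by (rule compact_Int_closed)
    have K'U: "K' \<subseteq> {y. psi j y \<in> U l}" unfolding K'_def using K(2) Cs_sub[OF l] V_sub[OF l] by auto
    have cont1: "continuous_on K' (pder as r)" for as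
    proof -
      have "pder as r differentiable_on UNIV" using rho_sm[OF l j] unfolding smooth_on_euc_def r_def by simp
      then show ?thesis using differentiable_imp_continuous_on continuous_on_subset by blast
    qed
    have R1: "\<forall>x\<in>set R. fst x \<ge> 0 \<and> snd x \<in> Cinf_seminorms I U \<phi> (U l)"
    proof
      fix x assume "x \<in> set R"
      then obtain q where q: "x = (sn K' (pder (fst q) r), (\<lambda>f. sn K' (pder (snd q) (f \<circ> psi j))))"
        unfolding R_def by auto
      have "snd x \<in> Cinf_seminorms I U \<phi> (U l)" unfolding seminorms_eq q using j K'cpt K'U by auto
      moreover have "fst x \<ge> 0" unfolding q using sn_nonneg[OF K'cpt cont1] by simp
      ultimately show "fst x \<ge> 0 \<and> snd x \<in> Cinf_seminorms I U \<phi> (U l)" by simp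
    qed
    have R2: "\<forall>w\<in>Cinf_space I U \<phi> (U l). p (hh c k l w) \<le> (\<Sum>x\<leftarrow>R. fst x * snd x w)"
    proof
      fix w :: "'m \<Rightarrow> real^'n" assume w: "w \<in> Cinf_space I U \<phi> (U l)"
      have "p (hh c k l w) \<le> (\<Sum>q\<leftarrow>lp ks. sn K' (pder (fst q) r) * sn K' (pder (snd q) (w \<circ> psi j)))"
        unfolding p K'_def r_def by (rule hh_bound[OF k l j K w])
      also have "\<dots> = (\<Sum>x\<leftarrow>R. fst x * snd x w)" unfolding R_def by (simp add: o_def)
      finally show "p (hh c k l w) \<le> (\<Sum>x\<leftarrow>R. fst x * snd x w)" .
    qed
    show "\<exists>R. (\<forall>r\<in>set R. fst r \<ge> 0 \<and> snd r \<in> Cinf_seminorms I U \<phi> (U l)) \<and>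
          (\<forall>w\<in>Cinf_space I U \<phi> (U l). p (hh c k l w) \<le> (\<Sum>r\<leftarrow>R. fst r * snd r w))"
      using R1 R2 by (intro exI[of _ R] conjI)
qed

lemma hh_cont:
  assumes k: "k \<in> I" and l: "l \<in> I"
  shows "continuous_map (Cinf_top I U \<phi> (U l)) (Cinf_top I U \<phi> (V k)) (hh c k l :: ('m \<Rightarrow> real^'n::finite) \<Rightarrow> _)"
proof (rule cinf_cont)
  show "\<forall>v\<in>Cinf_space I U \<phi> (U l). hh c k l v \<in> Cinf_space I U \<phi> (V k)" using hh_mem[OF k l] by blast
  show "\<forall>g\<in>Cinf_space I U \<phi> (U l). \<forall>v\<in>Cinf_space I U \<phi> (U l). (\<lambda>x. g x - v x) \<in> Cinf_space I U \<phi> (U l)"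
    using Cinf_sub[OF U_open[OF l]] by blast
  show "\<forall>g\<in>Cinf_space I U \<phi> (U l). \<forall>v\<in>Cinf_space I U \<phi> (U l). hh c k l (\<lambda>x. g x - v x) = (\<lambda>x. hh c k l g x - hh c k l v x)"
    unfolding hh_def by (intro ballI ext) (simp add: scaleR_diff_right)
  show "\<forall>p\<in>Cinf_seminorms I U \<phi> (V k). \<exists>R. (\<forall>r\<in>set R. fst r \<ge> 0 \<and> snd r \<in> Cinf_seminorms I U \<phi> (U l)) \<and>
          (\<forall>w\<in>Cinf_space I U \<phi> (U l). p (hh c k l w) \<le> (\<Sum>r\<leftarrow>R. fst r * snd r w))"
    by (rule hh_semibound[OF k l])
qed

end

context mfd begin

lemma vec_C: "\<forall>i\<in>I. \<forall>f\<in>Cinf_space I U \<phi> (W i). \<forall>g\<in>Cinf_space I U \<phi> (W i). \<forall>a b. (\<lambda>x. a *\<^sub>R f x + b *\<^sub>R g x) \<in> Cinf_space I U \<phi> (W i)"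
  if "\<forall>i\<in>I. openin M (W i)"
  using Cinf_lin that by blast

lemma U_open_all: "\<forall>i\<in>I. openin M (U i)" using U_open by blast
lemma V_open_all: "\<forall>i\<in>I. openin M (V i)" using V_open by blast

lemma mix_eq: "i \<in> I \<Longrightarrow> mix I U V \<rho> F i = (\<lambda>x. \<Sum>l\<in>Jset i. hh 1 i l (F l) x)"
  unfolding mix_def hh_def Jset_def by (intro ext) (simp only: mult_1_left, simp)

lemma mix_out: "i \<notin> I \<Longrightarrow> mix I U V \<rho> F i = (\<lambda>x. 0)"
  unfolding mix_def by simp

lemma mix_lin: "mix I U V \<rho> (\<lambda>i x. a *\<^sub>R F i x + b *\<^sub>R G i x) = (\<lambda>i x. a *\<^sub>R mix I U V \<rho> F i x + b *\<^sub>R mix I U V \<rho> G i x)"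
  unfolding mix_def
  by (intro ext) (simp add: scaleR_sum_right sum.distrib[symmetric] scaleR_add_right if_distrib algebra_simps cong: if_cong)


lemma hh_zero: "hh c k l (\<lambda>x. 0 :: 'v::real_vector) = (\<lambda>x. 0)"
  unfolding hh_def by (simp add: fun_eq_iff)

lemma mix_in_E:
  fixes F :: "'i \<Rightarrow> 'm \<Rightarrow> real^'n::finite"
  assumes F: "F \<in> dsum_carrier I (\<lambda>i. Cinf_space I U \<phi> (U i))"
  shows "mix I U V \<rho> F \<in> dsum_carrier I (\<lambda>i. Cinf_space I U \<phi> (V i))"
proof -
  have F1: "\<forall>i\<in>I. F i \<in> Cinf_space I U \<phi> (U i)" "\<forall>i. i \<notin> I \<longrightarrow> F i = (\<lambda>x. 0)" "finite {i\<in>I. F i \<noteq> (\<lambda>x. 0)}"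
    using F unfolding dsum_carrier_def by auto
  have a: "\<forall>i\<in>I. mix I U V \<rho> F i \<in> Cinf_space I U \<phi> (V i)"
  proof
    fix i assume i: "i \<in> I"
    have "(\<lambda>x. \<Sum>l\<in>Jset i. hh 1 i l (F l) x) \<in> Cinf_space I U \<phi> (V i)"
    proof (rule Cinf_sum[OF _ J_fin[OF i]])
      show "openin M (V i)" using V_open i by simp
      fix l assume "l \<in> Jset i"
      then have l: "l \<in> I" using J_sub by auto
      show "hh 1 i l (F l) \<in> Cinf_space I U \<phi> (V i)" by (rule hh_mem[OF i l], rule bspec[OF F1(1) l])
    qed
    then show "mix I U V \<rho> F i \<in> Cinf_space I U \<phi> (V i)" unfolding mix_eq[OF i] .
  qed
  have b: "\<forall>i. i \<notin> I \<longrightarrow> mix I U V \<rho> F i = (\<lambda>x. 0)" by (intro allI impI) (rule mix_out)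
  have "{i\<in>I. mix I U V \<rho> F i \<noteq> (\<lambda>x. 0)} \<subseteq> (\<Union>l\<in>{l\<in>I. F l \<noteq> (\<lambda>x. 0)}. Jset l)"
  proof
    fix i assume "i \<in> {i\<in>I. mix I U V \<rho> F i \<noteq> (\<lambda>x. 0)}"
    then have i: "i \<in> I" and nz: "mix I U V \<rho> F i \<noteq> (\<lambda>x. 0)" by auto
    have "\<exists>l\<in>Jset i. F l \<noteq> (\<lambda>x. 0)"
    proof (rule ccontr)
      assume "\<not> (\<exists>l\<in>Jset i. F l \<noteq> (\<lambda>x. 0))"
      then have h: "\<forall>l\<in>Jset i. F l = (\<lambda>x. 0)" by simp
      have z: "\<forall>l\<in>Jset i. hh 1 i l (F l) = (\<lambda>x. 0)"
      proof
        fix l assume "l \<in> Jset i"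
        then have "F l = (\<lambda>x. 0)" using bspec[OF h] by blast
        then show "hh 1 i l (F l) = (\<lambda>x. 0)" by (simp only: hh_zero)
      qed
      have "(\<lambda>x. \<Sum>l\<in>Jset i. hh 1 i l (F l) x) = (\<lambda>x. 0)"
      proof (intro ext sum.neutral ballI)
        fix x l assume "l \<in> Jset i"
        then have "hh 1 i l (F l) = (\<lambda>x. 0)" using bspec[OF z] by blast
        then show "hh 1 i l (F l) x = 0" by (rule fun_cong[where x=x, THEN trans]) simp
      qed
      then have "mix I U V \<rho> F i = (\<lambda>x. 0)" unfolding mix_eq[OF i] .
      then show False using nz by simp
    qed
    then obtain l where l: "l \<in> Jset i" "F l \<noteq> (\<lambda>x. 0)" by blast
    have lI: "l \<in> I" using l(1) J_sub by auto
    have "i \<in> Jset l" using J_sym[OF i lI] l(1) by simp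
    then show "i \<in> (\<Union>l\<in>{l\<in>I. F l \<noteq> (\<lambda>x. 0)}. Jset l)" using l lI by auto
  qed
  moreover have "finite (\<Union>l\<in>{l\<in>I. F l \<noteq> (\<lambda>x. 0)}. Jset l)" using F1(3) J_fin by auto
  ultimately have c: "finite {i\<in>I. mix I U V \<rho> F i \<noteq> (\<lambda>x. 0)}" by (rule finite_subset)
  show ?thesis unfolding dsum_carrier_def using a b c by (intro CollectI conjI)
qed

lemma mix_compat:
  assumes i: "i \<in> I" and j: "j \<in> I" and x: "x \<in> V i" "x \<in> V j"
  shows "mix I U V \<rho> F j x = mix I U V \<rho> F i x"
proof -
  define t where "t l = (if x \<in> V l then \<rho> l x *\<^sub>R F l x else 0)" for l
  have ei: "mix I U V \<rho> F i x = (\<Sum>l\<in>Jset i. t l)" unfolding mix_def t_def Jset_def using i x by simp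
  have ej: "mix I U V \<rho> F j x = (\<Sum>l\<in>Jset j. t l)" unfolding mix_def t_def Jset_def using j x by simp
  have xU: "x \<in> U i" "x \<in> U j" using V_sub i j x by auto
  have z: "t l = 0" if "l \<in> Jset a - Jset b" "b \<in> I" "x \<in> U b" for a b l
  proof -
    have "l \<in> I" "l \<notin> Jset b" using that J_sub by auto
    then have "x \<notin> V l" using V_sub that(3) unfolding Jset_def by auto
    then show ?thesis unfolding t_def by simp
  qed
  have "(\<Sum>l\<in>Jset i. t l) = (\<Sum>l\<in>Jset i \<inter> Jset j. t l)"
    by (rule sum.mono_neutral_right[OF J_fin[OF i]]) (use z[OF _ j xU(2)] in auto)
  moreover have "(\<Sum>l\<in>Jset j. t l) = (\<Sum>l\<in>Jset j \<inter> Jset i. t l)"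
    by (rule sum.mono_neutral_right[OF J_fin[OF j]]) (use z[OF _ i xU(1)] in auto)
  ultimately show ?thesis using ei ej by (simp add: Int_commute)
qed

lemma point_open:
  assumes k: "k \<in> I" and x: "x \<in> V k"
  shows "openin (Cinf_top I U \<phi> (V k)) {v \<in> Cinf_space I U \<phi> (V k). norm (v x :: real^'n::finite) < \<delta>}"
  unfolding openin_cinf cpred_def
proof (intro conjI ballI)
  show "{v \<in> Cinf_space I U \<phi> (V k). norm (v x :: real^'n) < \<delta>} \<subseteq> Cinf_space I U \<phi> (V k)" by auto
  fix v0 :: "'m \<Rightarrow> real^'n" assume "v0 \<in> {v \<in> Cinf_space I U \<phi> (V k). norm (v x) < \<delta>}"
  then have v0: "v0 \<in> Cinf_space I U \<phi> (V k)" "norm (v0 x) < \<delta>" by auto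
  define p0 where "p0 = (\<lambda>f :: 'm \<Rightarrow> real^'n. sn {\<phi> k x} (pder [] (f \<circ> psi k)))"
  have xU: "x \<in> U k" using V_sub k x by auto
  have pp: "psi k (\<phi> k x) = x" using psi_phi[OF k xU] .
  have p0_eq: "p0 f = norm (f x)" for f unfolding p0_def by (simp add: sn_single pp)
  have "p0 \<in> Cinf_seminorms I U \<phi> (V k)" unfolding seminorms_eq p0_def
    using k pp x by (intro CollectI exI[of _ k] exI[of _ "{\<phi> k x}"] exI[of _ "[]"]) auto
  moreover have "cbl (Cinf_space I U \<phi> (V k)) {p0} v0 (\<delta> - norm (v0 x)) \<subseteq> {v \<in> Cinf_space I U \<phi> (V k). norm (v x) < \<delta>}"
  proof
    fix g assume "g \<in> cbl (Cinf_space I U \<phi> (V k)) {p0} v0 (\<delta> - norm (v0 x))"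
    then have g: "g \<in> Cinf_space I U \<phi> (V k)" "norm (g x - v0 x) < \<delta> - norm (v0 x)" unfolding cbl_def p0_eq by auto
    have "norm (g x) \<le> norm (v0 x) + norm (g x - v0 x)" by (metis add.commute diff_add_cancel norm_triangle_ineq)
    then show "g \<in> {v \<in> Cinf_space I U \<phi> (V k). norm (v x) < \<delta>}" using g by auto
  qed
  ultimately show "\<exists>F e. finite F \<and> F \<subseteq> Cinf_seminorms I U \<phi> (V k) \<and> e > 0 \<and>
      cbl (Cinf_space I U \<phi> (V k)) F v0 e \<subseteq> {v \<in> Cinf_space I U \<phi> (V k). norm (v x) < \<delta>}"
    using v0(2) by (intro exI[of _ "{p0}"] exI[of _ "\<delta> - norm (v0 x)"] conjI) auto
qed


lemma mix_inj:
  assumes i: "i \<in> I"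
  defines "m \<equiv> real (card (Jset i))"
  shows "mix I U V \<rho> (inj_at i (v :: 'm \<Rightarrow> real^'n::finite)) j x = (\<Sum>k\<in>Jset i. (1/m) *\<^sub>R inj_at k (hh m k i v) j x)"
proof -
  have m0: "m \<noteq> 0" unfolding m_def using J_fin[OF i] J_self[OF i] by auto
  have L: "mix I U V \<rho> (inj_at i v) j x = (if j \<in> I \<and> x \<in> V j \<and> i \<in> Jset j \<and> x \<in> V i then \<rho> i x *\<^sub>R v x else 0)"
  proof (cases "j \<in> I \<and> x \<in> V j")
    case True
    have t: "(if x \<in> V l then \<rho> l x *\<^sub>R inj_at i v l x else 0) = (if l = i then (if x \<in> V i then \<rho> i x *\<^sub>R v x else 0) else 0)" for l
      by (simp add: inj_at_def)
    have "mix I U V \<rho> (inj_at i v) j x = (\<Sum>l\<in>Jset j. if x \<in> V l then \<rho> l x *\<^sub>R inj_at i v l x else 0)"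
      unfolding mix_def Jset_def using True by simp
    also have "\<dots> = (\<Sum>l\<in>Jset j. if l = i then (if x \<in> V i then \<rho> i x *\<^sub>R v x else 0) else 0)"
      by (rule sum.cong[OF refl]) (rule t)
    also have "\<dots> = (if i \<in> Jset j then (if x \<in> V i then \<rho> i x *\<^sub>R v x else 0) else 0)"
      by (rule sum.delta[OF J_fin]) (use True in simp)
    finally show ?thesis using True by simp
  next
    case False
    then show ?thesis unfolding mix_def by auto
  qed
  have t2: "(1/m) *\<^sub>R inj_at k (hh m k i v) j x = (if k = j then (1/m) *\<^sub>R hh m j i v x else 0)" for k
    by (simp add: inj_at_def)
  have "(\<Sum>k\<in>Jset i. (1/m) *\<^sub>R inj_at k (hh m k i v) j x) = (\<Sum>k\<in>Jset i. if k = j then (1/m) *\<^sub>R hh m j i v x else 0)"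
    by (rule sum.cong[OF refl]) (rule t2)
  also have "\<dots> = (if j \<in> Jset i then (1/m) *\<^sub>R hh m j i v x else 0)"
    by (rule sum.delta[OF J_fin[OF i]])
  also have "\<dots> = (if j \<in> Jset i \<and> x \<in> V j \<and> x \<in> V i then \<rho> i x *\<^sub>R v x else 0)"
    unfolding hh_def using m0 by simp
  finally have R: "(\<Sum>k\<in>Jset i. (1/m) *\<^sub>R inj_at k (hh m k i v) j x) = (if j \<in> Jset i \<and> x \<in> V j \<and> x \<in> V i then \<rho> i x *\<^sub>R v x else 0)" .
  have "(j \<in> I \<and> x \<in> V j \<and> i \<in> Jset j \<and> x \<in> V i) = (j \<in> Jset i \<and> x \<in> V j \<and> x \<in> V i)"
    using J_sym[OF i, of j] J_sub by auto
  then show ?thesis unfolding L R by simp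
qed

end

context mfd begin

lemma zero_all: "\<forall>j\<in>I. (\<lambda>x. 0) \<in> Cinf_space I U \<phi> (W j)" using Cinf_zero by blast
lemma top_all: "\<forall>i\<in>I. topspace (Cinf_top I U \<phi> (W i)) = Cinf_space I U \<phi> (W i)" using topspace_cinf by blast

lemma topE: "topspace (dsum_top I (\<lambda>i. Cinf_space I U \<phi> (V i)) (\<lambda>i. Cinf_top I U \<phi> (V i)))
   = dsum_carrier I (\<lambda>i. Cinf_space I U \<phi> (V i) :: ('m \<Rightarrow> real^'n::finite) set)"
  by (rule topspace_dsum[OF vec_C[OF V_open_all] zero_all top_all])

lemma topD: "topspace (dsum_top I (\<lambda>i. Cinf_space I U \<phi> (U i)) (\<lambda>i. Cinf_top I U \<phi> (U i)))
   = dsum_carrier I (\<lambda>i. Cinf_space I U \<phi> (U i) :: ('m \<Rightarrow> real^'n::finite) set)"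
  by (rule topspace_dsum[OF vec_C[OF U_open_all] zero_all top_all])

lemma S_closed:
  "closedin (dsum_top I (\<lambda>i. Cinf_space I U \<phi> (V i)) (\<lambda>i. Cinf_top I U \<phi> (V i)))
     {G\<in>dsum_carrier I (\<lambda>i. Cinf_space I U \<phi> (V i) :: ('m \<Rightarrow> real^'n::finite) set). \<forall>i\<in>I. \<forall>j\<in>I. \<forall>x\<in>V i \<inter> V j. G j x = G i x}"
  (is "closedin ?TE ?S")
proof -
  let ?E = "dsum_carrier I (\<lambda>i. Cinf_space I U \<phi> (V i) :: ('m \<Rightarrow> real^'n) set)"
  let ?C = "\<lambda>i. Cinf_space I U \<phi> (V i) :: ('m \<Rightarrow> real^'n) set"
  have vec: "\<forall>i\<in>I. \<forall>f\<in>?C i. \<forall>g\<in>?C i. \<forall>a b. (\<lambda>x. a *\<^sub>R f x + b *\<^sub>R g x) \<in> ?C i"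
    by (rule vec_C[OF V_open_all])
  have "dpred ?E I ?C (\<lambda>i. Cinf_top I U \<phi> (V i)) (?E - ?S)"
    unfolding dpred_def
  proof (intro conjI ballI)
    show "?E - ?S \<subseteq> ?E" by blast
    fix G assume G: "G \<in> ?E - ?S"
    then have GE: "G \<in> ?E" by simp
    have "\<not> (\<forall>i\<in>I. \<forall>j\<in>I. \<forall>x\<in>V i \<inter> V j. G j x = G i x)" using G by simp
    then obtain i j x where i: "i \<in> I" and j: "j \<in> I" and x: "x \<in> V i" "x \<in> V j" and ne: "G j x \<noteq> G i x"
      by blast
    have ij: "i \<noteq> j" using ne by auto
    define \<delta> where "\<delta> = norm (G j x - G i x)"
    have d0: "\<delta> > 0" unfolding \<delta>_def using ne by simp
    define W where "W = {H\<in>?E. norm (H j x - H i x) < \<delta>}"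
    have WE: "W \<subseteq> ?E" unfolding W_def by blast
    have aW: "abs_convex W" unfolding abs_convex_def
    proof (intro ballI allI impI)
      fix H1 H2 and a b :: real assume H1: "H1 \<in> W" and H2: "H2 \<in> W" and ab: "\<bar>a\<bar> + \<bar>b\<bar> \<le> 1"
      have E: "(\<lambda>i x. a *\<^sub>R H1 i x + b *\<^sub>R H2 i x) \<in> ?E" using dsum_lin[OF vec] H1 H2 unfolding W_def by blast
      define n1 where "n1 = norm (H1 j x - H1 i x)"
      define n2 where "n2 = norm (H2 j x - H2 i x)"
      have n1: "n1 < \<delta>" "n1 \<ge> 0" using H1 unfolding W_def n1_def by auto
      have n2: "n2 < \<delta>" "n2 \<ge> 0" using H2 unfolding W_def n2_def by auto
      have "norm ((a *\<^sub>R H1 j x + b *\<^sub>R H2 j x) - (a *\<^sub>R H1 i x + b *\<^sub>R H2 i x))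
          = norm (a *\<^sub>R (H1 j x - H1 i x) + b *\<^sub>R (H2 j x - H2 i x))" by (simp add: algebra_simps)
      also have "\<dots> \<le> \<bar>a\<bar> * n1 + \<bar>b\<bar> * n2" unfolding n1_def n2_def
        by (metis norm_scaleR norm_triangle_ineq order_trans order_refl)
      also have "\<dots> \<le> \<bar>a\<bar> * max n1 n2 + \<bar>b\<bar> * max n1 n2"
        by (intro add_mono mult_left_mono) auto
      also have "\<dots> = (\<bar>a\<bar> + \<bar>b\<bar>) * max n1 n2" by (simp add: algebra_simps)
      also have "\<dots> \<le> 1 * max n1 n2" using ab n1 n2 by (intro mult_right_mono) auto
      also have "\<dots> < \<delta>" using n1 n2 by simp
      finally show "(\<lambda>i x. a *\<^sub>R H1 i x + b *\<^sub>R H2 i x) \<in> W" unfolding W_def using E by simp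
    qed
    have nbW: "dnb I ?C (\<lambda>i. Cinf_top I U \<phi> (V i)) W" unfolding dnb_def
    proof
      fix k assume k: "k \<in> I"
      have injE: "\<And>v. v \<in> ?C k \<Longrightarrow> inj_at k v \<in> ?E" using inj_at_carrier[OF zero_all k] by blast
      show "\<exists>N. openin (Cinf_top I U \<phi> (V k)) N \<and> (\<lambda>x. 0) \<in> N \<and> N \<subseteq> {v \<in> ?C k. inj_at k v \<in> W}"
      proof (cases "k = j \<or> k = i")
        case True
        have xk: "x \<in> V k" using True x by auto
        let ?N = "{v \<in> ?C k. norm (v x) < \<delta>}"
        have "openin (Cinf_top I U \<phi> (V k)) ?N" by (rule point_open[OF k xk])
        moreover have "(\<lambda>x. 0) \<in> ?N" using d0 by (intro CollectI conjI Cinf_zero) simp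
        moreover have "?N \<subseteq> {v \<in> ?C k. inj_at k v \<in> W}"
        proof
          fix v assume v: "v \<in> ?N"
          have "norm (inj_at k v j x - inj_at k v i x) = norm (v x)"
            using True ij by (auto simp: inj_at_def)
          then show "v \<in> {v \<in> ?C k. inj_at k v \<in> W}" using v injE unfolding W_def by auto
        qed
        ultimately show ?thesis by blast
      next
        case False
        have "openin (Cinf_top I U \<phi> (V k)) (?C k)" using openin_topspace[of "Cinf_top I U \<phi> (V k)"] topspace_cinf by metis
        moreover have "(\<lambda>x. 0) \<in> ?C k" by (rule Cinf_zero)
        moreover have "?C k \<subseteq> {v \<in> ?C k. inj_at k v \<in> W}"
        proof
          fix v assume v: "v \<in> ?C k"
          have "norm (inj_at k v j x - inj_at k v i x) = 0" using False by (auto simp: inj_at_def)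
          then show "v \<in> {v \<in> ?C k. inj_at k v \<in> W}" using v injE d0 unfolding W_def by auto
        qed
        ultimately show ?thesis by blast
      qed
    qed
    have "dtr G W \<subseteq> ?E - ?S"
    proof
      fix K assume "K \<in> dtr G W"
      then obtain H where K: "K = (\<lambda>i x. G i x + H i x)" and H: "H \<in> W" unfolding dtr_def by blast
      have HE: "H \<in> ?E" and Hn: "norm (H j x - H i x) < \<delta>" using H unfolding W_def by auto
      have "(\<lambda>i x. 1 *\<^sub>R G i x + 1 *\<^sub>R H i x) \<in> ?E" using dsum_lin[OF vec GE HE] .
      then have KE: "K \<in> ?E" unfolding K by simp
      have "K j x \<noteq> K i x"
      proof
        assume "K j x = K i x"
        then have "G j x - G i x = - (H j x - H i x)" unfolding K by (simp add: algebra_simps)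
        then have "\<delta> = norm (H j x - H i x)" unfolding \<delta>_def by (simp add: norm_minus_commute)
        then show False using Hn by simp
      qed
      then have "K \<notin> ?S" using i j x by auto
      then show "K \<in> ?E - ?S" using KE by simp
    qed
    then show "\<exists>W. W \<subseteq> ?E \<and> abs_convex W \<and> dnb I ?C (\<lambda>i. Cinf_top I U \<phi> (V i)) W \<and> dtr G W \<subseteq> ?E - ?S"
      using WE aW nbW by blast
  qed
  then have "openin ?TE (?E - ?S)" unfolding openin_dsum .
  moreover have "?S \<subseteq> ?E" by blast
  ultimately show ?thesis unfolding closedin_def topE by simp
qed


lemma mix_cont:
  "continuous_map (dsum_top I (\<lambda>i. Cinf_space I U \<phi> (U i)) (\<lambda>i. Cinf_top I U \<phi> (U i)))
                  (dsum_top I (\<lambda>i. Cinf_space I U \<phi> (V i)) (\<lambda>i. Cinf_top I U \<phi> (V i)))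
                  (mix I U V \<rho> :: ('i \<Rightarrow> 'm \<Rightarrow> real^'n::finite) \<Rightarrow> _)"
proof -
  let ?D = "dsum_carrier I (\<lambda>i. Cinf_space I U \<phi> (U i) :: ('m \<Rightarrow> real^'n) set)"
  let ?E = "dsum_carrier I (\<lambda>i. Cinf_space I U \<phi> (V i) :: ('m \<Rightarrow> real^'n) set)"
  let ?CU = "\<lambda>i. Cinf_space I U \<phi> (U i) :: ('m \<Rightarrow> real^'n) set"
  let ?CV = "\<lambda>i. Cinf_space I U \<phi> (V i) :: ('m \<Rightarrow> real^'n) set"
  let ?TU = "\<lambda>i. Cinf_top I U \<phi> (U i) :: ('m \<Rightarrow> real^'n) topology"
  let ?TV = "\<lambda>i. Cinf_top I U \<phi> (V i) :: ('m \<Rightarrow> real^'n) topology"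
  let ?mix = "mix I U V \<rho> :: ('i \<Rightarrow> 'm \<Rightarrow> real^'n) \<Rightarrow> _"
  have vecU: "\<forall>i\<in>I. \<forall>f\<in>?CU i. \<forall>g\<in>?CU i. \<forall>a b. (\<lambda>x. a *\<^sub>R f x + b *\<^sub>R g x) \<in> ?CU i"
    by (rule vec_C[OF U_open_all])
  have img: "?mix ` ?D \<subseteq> ?E" using mix_in_E by blast
  have opn: "openin (dsum_top I ?CU ?TU) {F \<in> ?D. ?mix F \<in> O'}" if O': "openin (dsum_top I ?CV ?TV) O'" for O'
  proof -
    have O'p: "dpred ?E I ?CV ?TV O'" using O' unfolding openin_dsum .
    have O'all: "\<forall>F\<in>O'. \<exists>W. W \<subseteq> ?E \<and> abs_convex W \<and> dnb I ?CV ?TV W \<and> dtr F W \<subseteq> O'"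
      using O'p unfolding dpred_def by (elim conjE)
    show ?thesis unfolding openin_dsum dpred_def
    proof (intro conjI ballI)
      show "{F \<in> ?D. ?mix F \<in> O'} \<subseteq> ?D" by blast
      fix F0 assume "F0 \<in> {F \<in> ?D. ?mix F \<in> O'}"
      then have F0: "F0 \<in> ?D" "?mix F0 \<in> O'" by auto
      obtain W where W: "W \<subseteq> ?E" "abs_convex W" "dnb I ?CV ?TV W" "dtr (?mix F0) W \<subseteq> O'"
        using bspec[OF O'all F0(2)] by iprover
      have Wc: "\<And>F G a b. F\<in>W \<Longrightarrow> G\<in>W \<Longrightarrow> \<bar>a\<bar>+\<bar>b\<bar> \<le> 1 \<Longrightarrow> (\<lambda>i x. a *\<^sub>R F i x + b *\<^sub>R G i x) \<in> W"
        by (rule W(2)[unfolded abs_convex_def, rule_format])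
      define W' where "W' = {H \<in> ?D. ?mix H \<in> W}"
      have W'D: "W' \<subseteq> ?D" unfolding W'_def by blast
      have aW': "abs_convex W'" unfolding abs_convex_def
      proof (intro ballI allI impI)
        fix H1 H2 and a b :: real assume H1: "H1 \<in> W'" and H2: "H2 \<in> W'" and ab: "\<bar>a\<bar> + \<bar>b\<bar> \<le> 1"
        have "(\<lambda>i x. a *\<^sub>R H1 i x + b *\<^sub>R H2 i x) \<in> ?D" using dsum_lin[OF vecU] H1 H2 unfolding W'_def by blast
        moreover have "?mix (\<lambda>i x. a *\<^sub>R H1 i x + b *\<^sub>R H2 i x) \<in> W"
          unfolding mix_lin using Wc H1 H2 ab unfolding W'_def by blast
        ultimately show "(\<lambda>i x. a *\<^sub>R H1 i x + b *\<^sub>R H2 i x) \<in> W'" unfolding W'_def by blast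
      qed
      have nbW': "dnb I ?CU ?TU W'" unfolding dnb_def
      proof
        fix i assume i: "i \<in> I"
        have nbW: "\<forall>k\<in>I. \<exists>N. openin (?TV k) N \<and> (\<lambda>x. 0) \<in> N \<and> N \<subseteq> {v \<in> ?CV k. inj_at k v \<in> W}"
          using W(3) unfolding dnb_def .
        obtain Ni where "openin (?TV i) Ni" "(\<lambda>x. 0) \<in> Ni" "Ni \<subseteq> {v \<in> ?CV i. inj_at i v \<in> W}"
          using bspec[OF nbW i] by iprover
        then have iz: "inj_at i (\<lambda>x. 0) \<in> W" by blast
        have e: "inj_at i (\<lambda>x. 0 :: real^'n) = (\<lambda>j x. 0)" unfolding inj_at_def by (intro ext) simp
        have zW: "(\<lambda>j x. 0) \<in> W" using iz unfolding e .
        have "\<forall>k\<in>Jset i. \<exists>N. openin (?TV k) N \<and> (\<lambda>x. 0) \<in> N \<and> N \<subseteq> {v \<in> ?CV k. inj_at k v \<in> W}"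
          using nbW J_sub by blast
        from bchoice[OF this] obtain Nk where Nk: "\<forall>k\<in>Jset i. openin (?TV k) (Nk k) \<and> (\<lambda>x. 0) \<in> Nk k \<and> Nk k \<subseteq> {v \<in> ?CV k. inj_at k v \<in> W}" ..
        define m where "m = real (card (Jset i))"
        have m0: "m > 0" unfolding m_def using J_fin[OF i] J_self[OF i] card_gt_0_iff by auto
        define N' where "N' = ?CU i \<inter> \<Inter>((\<lambda>k. {v \<in> ?CU i. hh m k i v \<in> Nk k}) ` Jset i)"
        have "openin (?TU i) N'" unfolding N'_def
        proof (rule openin_Int_Inter)
          show "finite ((\<lambda>k. {v \<in> ?CU i. hh m k i v \<in> Nk k}) ` Jset i)" using J_fin[OF i] by simp
          show "openin (?TU i) (?CU i)" using openin_topspace[of "?TU i"] topspace_cinf by metis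
          fix X assume "X \<in> (\<lambda>k. {v \<in> ?CU i. hh m k i v \<in> Nk k}) ` Jset i"
          then obtain k where k: "k \<in> Jset i" and X: "X = {v \<in> ?CU i. hh m k i v \<in> Nk k}" by blast
          have kI: "k \<in> I" using k J_sub by auto
          have "continuous_map (?TU i) (?TV k) (hh m k i)" by (rule hh_cont[OF kI i])
          moreover have "openin (?TV k) (Nk k)" using Nk k by blast
          ultimately have "openin (?TU i) {v \<in> topspace (?TU i). hh m k i v \<in> Nk k}"
            unfolding continuous_map by blast
          then show "openin (?TU i) X" unfolding X topspace_cinf .
        qed
        moreover have "(\<lambda>x. 0) \<in> N'"
        proof -
          have z: "(\<lambda>x. 0) \<in> ?CU i" by (rule Cinf_zero)
          have "\<forall>k\<in>Jset i. hh m k i (\<lambda>x. 0 :: real^'n) \<in> Nk k" using Nk by (simp only: hh_zero) blast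
          then show ?thesis unfolding N'_def using z by blast
        qed
        moreover have "N' \<subseteq> {v \<in> ?CU i. inj_at i v \<in> W'}"
        proof
          fix v assume v: "v \<in> N'"
          then have vC: "v \<in> ?CU i" and vk: "\<forall>k\<in>Jset i. hh m k i v \<in> Nk k" unfolding N'_def by auto
          have injD: "inj_at i v \<in> ?D" by (rule inj_at_carrier[OF zero_all[of U] i vC])
          have mem: "\<forall>k\<in>Jset i. inj_at k (hh m k i v) \<in> W"
          proof
            fix k assume k: "k \<in> Jset i"
            have "hh m k i v \<in> Nk k" using vk k by blast
            then show "inj_at k (hh m k i v) \<in> W" using Nk k by blast
          qed
          have "(\<Sum>k\<in>Jset i. \<bar>1/m\<bar>) \<le> 1" using m0 unfolding m_def by simp
          then have "(\<lambda>j x. \<Sum>k\<in>Jset i. (1/m) *\<^sub>R inj_at k (hh m k i v) j x) \<in> W"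
            by (intro abs_convex_sum[OF W(2) zW J_fin[OF i] mem])
          moreover have "?mix (inj_at i v) = (\<lambda>j x. \<Sum>k\<in>Jset i. (1/m) *\<^sub>R inj_at k (hh m k i v) j x)"
            unfolding m_def by (intro ext mix_inj[OF i])
          ultimately have "?mix (inj_at i v) \<in> W" by simp
          then show "v \<in> {v \<in> ?CU i. inj_at i v \<in> W'}" unfolding W'_def using vC injD by blast
        qed
        ultimately show "\<exists>N. openin (?TU i) N \<and> (\<lambda>x. 0) \<in> N \<and> N \<subseteq> {v \<in> ?CU i. inj_at i v \<in> W'}"
          by blast
      qed
      have "dtr F0 W' \<subseteq> {F \<in> ?D. ?mix F \<in> O'}"
      proof
        fix K assume "K \<in> dtr F0 W'"
        then obtain H where K: "K = (\<lambda>i x. F0 i x + H i x)" and H: "H \<in> W'" unfolding dtr_def by blast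
        have HD: "H \<in> ?D" and HW: "?mix H \<in> W" using H unfolding W'_def by auto
        have "(\<lambda>i x. 1 *\<^sub>R F0 i x + 1 *\<^sub>R H i x) \<in> ?D" using dsum_lin[OF vecU F0(1) HD] .
        then have KD: "K \<in> ?D" unfolding K by simp
        have "?mix (\<lambda>i x. 1 *\<^sub>R F0 i x + 1 *\<^sub>R H i x) = (\<lambda>i x. 1 *\<^sub>R ?mix F0 i x + 1 *\<^sub>R ?mix H i x)"
          by (rule mix_lin)
        then have "?mix K = (\<lambda>i x. ?mix F0 i x + ?mix H i x)" unfolding K by simp
        then have "?mix K \<in> dtr (?mix F0) W" unfolding dtr_def using HW by blast
        then show "K \<in> {F \<in> ?D. ?mix F \<in> O'}" using W(4) KD by blast
      qed
      then show "\<exists>W. W \<subseteq> ?D \<and> abs_convex W \<and> dnb I ?CU ?TU W \<and> dtr F0 W \<subseteq> {F \<in> ?D. ?mix F \<in> O'}"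
        using W'D aW' nbW' by blast
    qed
  qed
  show ?thesis unfolding continuous_map topD topE using img opn by blast
qed

end

theorem lemma4p11:
  fixes M :: "'m topology" and I :: "'i set"
    and U V :: "'i \<Rightarrow> 'm set" and \<phi> :: "'i \<Rightarrow> 'm \<Rightarrow> real^'d::finite"
    and \<rho> :: "'i \<Rightarrow> 'm \<Rightarrow> real"
  assumes hausdorff: "Hausdorff_space M"
    and sigma_compact: "\<exists>K :: nat \<Rightarrow> 'm set. (\<forall>k. compactin M (K k)) \<and> (\<Union>k. K k) = topspace M"
    and atlas: "smooth_atlas M I U \<phi>"
    and chart_onto: "\<forall>i\<in>I. \<phi> i ` U i = UNIV"
    and loc_fin: "\<forall>x\<in>topspace M. \<exists>N. openin M N \<and> x \<in> N \<and> finite {i\<in>I. U i \<inter> N \<noteq> {}}"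
    and rel_compact: "\<forall>i\<in>I. compactin M (M closure_of (U i))"
    and V_open: "\<forall>i\<in>I. openin M (V i) \<and> M closure_of (V i) \<subseteq> U i"
    and pou_smooth: "\<forall>i\<in>I. mf_smooth I U \<phi> (topspace M) (\<rho> i)"
    and pou_nonneg: "\<forall>i\<in>I. \<forall>x\<in>topspace M. \<rho> i x \<ge> 0"
    and pou_supp: "\<forall>i\<in>I. M closure_of {x\<in>topspace M. \<rho> i x \<noteq> 0} \<subseteq> V i"
    and pou_fin: "\<forall>x\<in>topspace M. finite {i\<in>I. \<rho> i x \<noteq> 0}"
    and pou_sum: "\<forall>x\<in>topspace M. (\<Sum>i\<in>{i\<in>I. \<rho> i x \<noteq> 0}. \<rho> i x) = 1"
  defines "D \<equiv> dsum_carrier I (\<lambda>i. Cinf_space I U \<phi> (U i) :: ('m \<Rightarrow> real^'n::finite) set)"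
    and "TD \<equiv> dsum_top I (\<lambda>i. Cinf_space I U \<phi> (U i)) (\<lambda>i. Cinf_top I U \<phi> (U i))"
    and "E \<equiv> dsum_carrier I (\<lambda>i. Cinf_space I U \<phi> (V i) :: ('m \<Rightarrow> real^'n) set)"
    and "TE \<equiv> dsum_top I (\<lambda>i. Cinf_space I U \<phi> (V i)) (\<lambda>i. Cinf_top I U \<phi> (V i))"
    and "S \<equiv> {G\<in>dsum_carrier I (\<lambda>i. Cinf_space I U \<phi> (V i) :: ('m \<Rightarrow> real^'n) set). \<forall>i\<in>I. \<forall>j\<in>I. \<forall>x\<in>V i \<inter> V j. G j x = G i x}"
  shows "mix I U V \<rho> ` D \<subseteq> E
    \<and> (\<forall>F\<in>D. \<forall>G\<in>D. \<forall>a b. mix I U V \<rho> (\<lambda>i x. a *\<^sub>R F i x + b *\<^sub>R G i x)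
            = (\<lambda>i x. a *\<^sub>R mix I U V \<rho> F i x + b *\<^sub>R mix I U V \<rho> G i x))
    \<and> continuous_map TD TE (mix I U V \<rho>)
    \<and> mix I U V \<rho> ` D \<subseteq> S
    \<and> closedin TE S"
proof -
  interpret mfd M I U V \<phi> \<rho>
    by (rule mfd.intro[OF atlas chart_onto loc_fin rel_compact V_open pou_smooth pou_supp])
  have c1: "mix I U V \<rho> ` D \<subseteq> E" unfolding D_def E_def using mix_in_E by blast
  have c2: "\<forall>F\<in>D. \<forall>G\<in>D. \<forall>a b. mix I U V \<rho> (\<lambda>i x. a *\<^sub>R F i x + b *\<^sub>R G i x)
            = (\<lambda>i x. a *\<^sub>R mix I U V \<rho> F i x + b *\<^sub>R mix I U V \<rho> G i x)"
    by (intro ballI allI) (rule mix_lin)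
  have c3: "continuous_map TD TE (mix I U V \<rho>)" unfolding TD_def TE_def by (rule mix_cont)
  have c4: "mix I U V \<rho> ` D \<subseteq> S"
  proof
    fix Y assume "Y \<in> mix I U V \<rho> ` D"
    then obtain F where F: "F \<in> D" and Y: "Y = mix I U V \<rho> F" by blast
    have "Y \<in> E" using c1 F Y by blast
    moreover have "\<forall>i\<in>I. \<forall>j\<in>I. \<forall>x\<in>V i \<inter> V j. Y j x = Y i x"
      unfolding Y using mix_compat by blast
    ultimately show "Y \<in> S" unfolding S_def E_def by blast
  qed
  have c5: "closedin TE S" unfolding TE_def S_def by (rule S_closed)
  show ?thesis using c1 c2 c3 c4 c5 by blast
qed


end
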